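(* If $\Gamma$ is a countable discrete group containing a central element of infinite order, then $\mathbb{C}\Gamma$ is not $C^*_r$-unique.
   Context: $\mathbb{C}\Gamma$ is the complex group algebra. $\mathbb{C}\Gamma$ is called $C^*_r$-unique if no $C^*$-norm on $\mathbb{C}\Gamma$ is properly majorised by the reduced $C^*$-norm (the norm from the left regular representation $\lambda:\mathbb{C}\Gamma\to\mathbb{B}(\ell^2\Gamma)$), i.e. there is no $C^*$-norm $\|\cdot\|$ on $\mathbb{C}\Gamma$ with $\|a\|\le\|\lambda(a)\|$ for all $a$ and strict inequality for some $a$. *)

theory Defs
  imports "HOL-Analysis.Analysis" "HOL-Library.Countable"
begin

text \<open>A (discrete) group Gamma is modelled as a type of class group_add (the group
operation is written +, it need not be commutative).\<close>

definition group_alg :: "('g::group_add \<Rightarrow> complex) set" where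
  "group_alg = {a. finite {g. a g \<noteq> 0}}"

text \<open>Convolution; for a finitely supported a and any xi this is the left regular
representation lambda(a) applied to xi, and on the group algebra it is the product.\<close>
definition conv :: "('g::group_add \<Rightarrow> complex) \<Rightarrow> ('g \<Rightarrow> complex) \<Rightarrow> ('g \<Rightarrow> complex)" where
  "conv a \<xi> = (\<lambda>g. \<Sum>h\<in>{h. a h \<noteq> 0}. a h * \<xi> (- h + g))"

definition inv_star :: "('g::group_add \<Rightarrow> complex) \<Rightarrow> ('g \<Rightarrow> complex)" where
  "inv_star a = (\<lambda>g. cnj (a (- g)))"

definition l2 :: "('g \<Rightarrow> complex) set" where
  "l2 = {\<xi>. (\<lambda>g. (cmod (\<xi> g))^2) summable_on UNIV}"

definition l2norm :: "('g \<Rightarrow> complex) \<Rightarrow> real" where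
  "l2norm \<xi> = sqrt (\<Sum>\<^sub>\<infinity>g. (cmod (\<xi> g))^2)"

definition reduced_norm :: "('g::group_add \<Rightarrow> complex) \<Rightarrow> real" where
  "reduced_norm a = Sup {l2norm (conv a \<xi>) | \<xi>. \<xi> \<in> l2 \<and> l2norm \<xi> \<le> 1}"

definition is_cstar_norm :: "(('g::group_add \<Rightarrow> complex) \<Rightarrow> real) \<Rightarrow> bool" where
  "is_cstar_norm N \<longleftrightarrow>
     (\<forall>a\<in>group_alg. 0 \<le> N a \<and> (N a = 0 \<longleftrightarrow> a = (\<lambda>_. 0))) \<and>
     (\<forall>a\<in>group_alg. \<forall>b\<in>group_alg. N (\<lambda>g. a g + b g) \<le> N a + N b) \<and>
     (\<forall>c. \<forall>a\<in>group_alg. N (\<lambda>g. c * a g) = cmod c * N a) \<and>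
     (\<forall>a\<in>group_alg. \<forall>b\<in>group_alg. N (conv a b) \<le> N a * N b) \<and>
     (\<forall>a\<in>group_alg. N (conv (inv_star a) a) = (N a)^2)"

definition cstar_r_unique :: "'g::group_add itself \<Rightarrow> bool" where
  "cstar_r_unique _ \<longleftrightarrow>
     \<not> (\<exists>N :: ('g \<Rightarrow> complex) \<Rightarrow> real. is_cstar_norm N \<and>
          (\<forall>a\<in>group_alg. N a \<le> reduced_norm a) \<and>
          (\<exists>a\<in>group_alg. N a < reduced_norm a))"

definition central :: "'g::group_add \<Rightarrow> bool" where
  "central z \<longleftrightarrow> (\<forall>g. z + g = g + z)"

definition infinite_order :: "'g::group_add \<Rightarrow> bool" where
  "infinite_order z \<longleftrightarrow> (\<forall>n::nat. n > 0 \<longrightarrow> (((+) z) ^^ n) 0 \<noteq> 0)"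

end

theory Submission
  imports Defs "HOL-Library.Groups_Big_Fun" "HOL-Computational_Algebra.Polynomial" "HOL-Real_Asymp.Real_Asymp"
begin

locale cz =
  fixes z :: "'g::group_add"
  assumes central: "central z" and inford: "infinite_order z"
begin

definition nmul :: "nat \<Rightarrow> 'g" where "nmul n = (((+) z) ^^ n) 0"

lemma nmul_0[simp]: "nmul 0 = 0" by (simp add: nmul_def)
lemma nmul_Suc: "nmul (Suc n) = z + nmul n" by (simp add: nmul_def)

lemma zc: "z + g = g + z" using central unfolding central_def by blast

lemma nmul_central: "nmul n + g = g + nmul n"
proof (induction n)
  case 0 then show ?case by simp
next
  case (Suc n)
  have "nmul (Suc n) + g = z + (nmul n + g)" by (simp add: nmul_Suc add.assoc)
  also have "\<dots> = (z + g) + nmul n" by (simp only: Suc add.assoc)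
  also have "\<dots> = g + nmul (Suc n)" by (simp only: zc[of g] nmul_Suc add.assoc)
  finally show ?case .
qed

lemma nmul_ne0: "n > 0 \<Longrightarrow> nmul n \<noteq> 0"
  using inford unfolding infinite_order_def nmul_def by blast

definition zm :: "int \<Rightarrow> 'g" where
  "zm j = (if 0 \<le> j then nmul (nat j) else - nmul (nat (-j)))"

lemma zm_0[simp]: "zm 0 = 0" by (simp add: zm_def)

lemma zm_succ: "zm (j + 1) = z + zm j"
proof (cases "0 \<le> j")
  case True
  then have "nat (j+1) = Suc (nat j)" by simp
  then show ?thesis using True by (simp add: zm_def nmul_Suc)
next
  case False
  show ?thesis
  proof (cases "j = -1")
    case True then show ?thesis by (simp add: zm_def nmul_Suc)
  next
    case False2: False
    then have j: "j + 1 < 0" using False by simp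
    define m where "m = nat (-j - 1)"
    have e1: "nat (- j) = Suc m" using j by (simp add: m_def)
    have e2: "nat (-(j+1)) = m" by (simp add: m_def)
    have "z + zm j = z + - (z + nmul m)" using False by (simp add: zm_def e1 nmul_Suc)
    also have "\<dots> = z + - (nmul m + z)" by (simp only: nmul_central[of m z])
    also have "\<dots> = - nmul m" by (simp only: minus_add add_minus_cancel)
    finally show ?thesis using j by (simp add: zm_def m_def)
  qed
qed

lemma zm_pred: "zm (j - 1) = - z + zm j"
proof -
  have "zm j = z + zm (j - 1)" using zm_succ[of "j - 1"] by simp
  then show ?thesis by (metis minus_add_cancel)
qed

lemma zm_add: "zm (i + j) = zm i + zm j"
proof (induction i rule: int_induct[where k=0])
  case base then show ?case by simp
next
  case (step1 i)
  have "zm (i + 1 + j) = zm ((i + j) + 1)" by (simp add: ac_simps)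
  also have "\<dots> = z + zm (i + j)" by (rule zm_succ)
  also have "\<dots> = zm (i + 1) + zm j" by (simp add: step1 zm_succ add.assoc)
  finally show ?case .
next
  case (step2 i)
  have "zm (i - 1 + j) = zm ((i + j) - 1)" by (rule arg_cong[where f=zm]) simp
  also have "\<dots> = - z + zm (i + j)" by (rule zm_pred)
  also have "\<dots> = zm (i - 1) + zm j" by (simp add: step2 zm_pred add.assoc)
  finally show ?case .
qed

lemma zm_1[simp]: "zm 1 = z" by (simp add: zm_def nmul_Suc)

lemma zm_neg: "zm (- j) = - zm j"
  using zm_add[of "-j" j] by (simp add: eq_neg_iff_add_eq_0)

lemma zm_central: "zm j + g = g + zm j"
proof (cases "0 \<le> j")
  case True then show ?thesis by (simp add: zm_def nmul_central)
next
  case False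
  have "- nmul n + g = g + - nmul n" for n
  proof -
    have "nmul n + (g + - nmul n) = g" by (simp only: add.assoc[symmetric] nmul_central[of n g]) (simp add: add.assoc)
    then show ?thesis by (metis minus_add_cancel)
  qed
  then show ?thesis using False by (simp add: zm_def)
qed

lemma zm_eq0: "zm j = 0 \<longleftrightarrow> j = 0"
proof
  assume h: "zm j = 0"
  show "j = 0"
  proof (rule ccontr)
    assume "j \<noteq> 0"
    then show False
    proof (cases "0 \<le> j")
      case True then show False using h nmul_ne0[of "nat j"] \<open>j \<noteq> 0\<close> by (simp add: zm_def)
    next
      case False then show False using h nmul_ne0[of "nat (-j)"] by (simp add: zm_def)
    qed
  qed
qed simp

lemma zm_inj: "zm i = zm j \<longleftrightarrow> i = j"
proof
  assume "zm i = zm j"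
  have "zm (i + - j) = zm i + - zm j" by (simp only: zm_add zm_neg)
  then have "zm (i + - j) = 0" using \<open>zm i = zm j\<close> by simp
  then show "i = j" by (simp only: zm_eq0)
qed simp

lemma inj_zm: "inj zm" by (simp add: inj_def zm_inj)

end

definition spt :: "('g \<Rightarrow> complex) \<Rightarrow> 'g set" where "spt a = {g. a g \<noteq> 0}"
definition tr :: "'g::group_add \<Rightarrow> ('g \<Rightarrow> complex) \<Rightarrow> ('g \<Rightarrow> complex)" where
  "tr k \<xi> = (\<lambda>g. \<xi> (- k + g))"
definition dl :: "'g \<Rightarrow> complex \<Rightarrow> ('g \<Rightarrow> complex)" where
  "dl a c = (\<lambda>g. if g = a then c else 0)"
definition ip :: "('g \<Rightarrow> complex) \<Rightarrow> ('g \<Rightarrow> complex) \<Rightarrow> complex" where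
  "ip x y = Sum_any (\<lambda>g. x g * cnj (y g))"
definition nsq :: "('g \<Rightarrow> complex) \<Rightarrow> real" where
  "nsq x = Sum_any (\<lambda>g. (cmod (x g))^2)"

lemma neg_add0: "(- h + g = (0::'g::group_add)) \<longleftrightarrow> h = g"
proof
  assume "- h + g = 0" then have "h + (- h + g) = h" by simp
  then show "h = g" by (simp add: add.assoc[symmetric])
qed simp

lemma ga_iff: "a \<in> group_alg \<longleftrightarrow> finite (spt a)"
  by (simp add: group_alg_def spt_def)

lemma conv_SA:
  assumes "a \<in> group_alg"
  shows "conv a \<xi> g = Sum_any (\<lambda>h. a h * \<xi> (- h + g))"
proof -
  have "finite (spt a)" using assms by (simp add: ga_iff)
  moreover have "{h. a h * \<xi> (- h + g) \<noteq> 0} \<subseteq> spt a" by (auto simp: spt_def)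
  ultimately show ?thesis
    by (simp add: Sum_any.expand_superset[of "spt a"] conv_def spt_def)
qed

lemma conv_sum: "conv a \<xi> = (\<lambda>g. \<Sum>h\<in>spt a. a h * tr h \<xi> g)"
  by (simp add: conv_def spt_def tr_def)

lemma ga_zero[simp]: "(\<lambda>_. 0) \<in> group_alg" by (simp add: ga_iff spt_def)

lemma ga_add: "a \<in> group_alg \<Longrightarrow> b \<in> group_alg \<Longrightarrow> (\<lambda>g. a g + b g) \<in> group_alg"
  unfolding ga_iff spt_def
  by (rule finite_subset[of _ "{g. a g \<noteq> 0} \<union> {g. b g \<noteq> 0}"]) auto

lemma ga_smult: "a \<in> group_alg \<Longrightarrow> (\<lambda>g. c * a g) \<in> group_alg"
  unfolding ga_iff spt_def
  by (rule finite_subset[of _ "{g. a g \<noteq> 0}"]) auto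

lemma ga_tr: "a \<in> group_alg \<Longrightarrow> tr k a \<in> group_alg"
proof -
  assume "a \<in> group_alg"
  then have "finite ((\<lambda>g. k + g) ` spt a)" by (simp add: ga_iff)
  moreover have "spt (tr k a) \<subseteq> (\<lambda>g. k + g) ` spt a"
  proof
    fix g assume "g \<in> spt (tr k a)"
    then have "- k + g \<in> spt a" by (simp add: spt_def tr_def)
    then show "g \<in> (\<lambda>g. k + g) ` spt a" by (rule rev_image_eqI) (simp add: add.assoc[symmetric])
  qed
  ultimately show ?thesis by (simp add: ga_iff finite_subset)
qed

lemma ga_dl: "dl a c \<in> group_alg"
  unfolding ga_iff spt_def dl_def by (rule finite_subset[of _ "{a}"]) auto

lemma ga_inv_star: "a \<in> group_alg \<Longrightarrow> inv_star a \<in> group_alg"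
proof -
  assume "a \<in> group_alg"
  then have "finite (uminus ` spt a)" by (simp add: ga_iff)
  moreover have "spt (inv_star a) \<subseteq> uminus ` spt a"
  proof
    fix g assume "g \<in> spt (inv_star a)"
    then have "- g \<in> spt a" by (simp add: spt_def inv_star_def)
    then show "g \<in> uminus ` spt a" by (rule rev_image_eqI) simp
  qed
  ultimately show ?thesis by (simp add: ga_iff finite_subset)
qed

lemma ga_conv: "a \<in> group_alg \<Longrightarrow> \<xi> \<in> group_alg \<Longrightarrow> conv a \<xi> \<in> group_alg"
proof -
  assume a: "a \<in> group_alg" and x: "\<xi> \<in> group_alg"
  have "finite ((\<lambda>(h,k). h + k) ` (spt a \<times> spt \<xi>))" using a x by (simp add: ga_iff)
  moreover have "spt (conv a \<xi>) \<subseteq> (\<lambda>(h,k). h + k) ` (spt a \<times> spt \<xi>)"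
  proof
    fix g assume "g \<in> spt (conv a \<xi>)"
    then have "(\<Sum>h\<in>{h. a h \<noteq> 0}. a h * \<xi> (- h + g)) \<noteq> 0" by (simp add: spt_def conv_def)
    then obtain h where h: "h \<in> {h. a h \<noteq> 0}" "a h * \<xi> (- h + g) \<noteq> 0"
      by (meson sum.not_neutral_contains_not_neutral)
    then have "(h, - h + g) \<in> spt a \<times> spt \<xi>" by (simp add: spt_def)
    then show "g \<in> (\<lambda>(h,k). h + k) ` (spt a \<times> spt \<xi>)"
      by (rule rev_image_eqI) (simp add: add.assoc[symmetric])
  qed
  ultimately show ?thesis by (simp add: ga_iff finite_subset)
qed

lemma conv_add_left:
  assumes "a \<in> group_alg" "b \<in> group_alg"
  shows "conv (\<lambda>g. a g + b g) \<xi> = (\<lambda>g. conv a \<xi> g + conv b \<xi> g)"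
proof
  fix g
  have f1: "finite {h. a h * \<xi> (- h + g) \<noteq> 0}"
    using assms(1) by (rule_tac finite_subset[of _ "spt a"]) (auto simp: ga_iff spt_def)
  have f2: "finite {h. b h * \<xi> (- h + g) \<noteq> 0}"
    using assms(2) by (rule_tac finite_subset[of _ "spt b"]) (auto simp: ga_iff spt_def)
  show "conv (\<lambda>g. a g + b g) \<xi> g = conv a \<xi> g + conv b \<xi> g"
    using Sum_any.distrib[OF f1 f2]
    by (simp add: conv_SA assms ga_add distrib_right)
qed

lemma conv_smult_left:
  assumes "a \<in> group_alg"
  shows "conv (\<lambda>g. c * a g) \<xi> = (\<lambda>g. c * conv a \<xi> g)"
proof
  fix g
  have f1: "finite {h. a h * \<xi> (- h + g) \<noteq> 0}"
    using assms(1) by (rule_tac finite_subset[of _ "spt a"]) (auto simp: ga_iff spt_def)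
  show "conv (\<lambda>g. c * a g) \<xi> g = c * conv a \<xi> g"
    using Sum_any_right_distrib[OF f1, of c]
    by (simp add: conv_SA assms ga_smult mult.assoc)
qed

lemma conv_zero_left: "conv (\<lambda>_. 0) \<xi> = (\<lambda>_. 0)"
  by (simp add: conv_def)

lemma conv_dl_left: "conv (dl k 1) \<xi> = tr k \<xi>"
proof -
  have "{h. dl k 1 h \<noteq> 0} = {k}" by (auto simp: dl_def)
  then show ?thesis by (simp add: conv_def tr_def dl_def)
qed

lemma conv_dl0_right:
  assumes "a \<in> group_alg"
  shows "conv a (dl 0 1) = a"
proof
  fix g
  have "conv a (dl 0 1) g = Sum_any (\<lambda>h. a h * dl 0 1 (- h + g))" by (simp add: conv_SA assms)
  also have "\<dots> = Sum_any (\<lambda>h. if h = g then a g else 0)"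
    by (rule Sum_any.cong) (auto simp: dl_def neg_add0)
  also have "\<dots> = a g" by simp
  finally show "conv a (dl 0 1) g = a g" .
qed

lemma conv_assoc:
  assumes a: "a \<in> group_alg" and x: "x \<in> group_alg"
  shows "conv (conv a x) u = conv a (conv x u)"
proof
  fix g
  let ?S = "(\<lambda>(h,k). h + k) ` (spt a \<times> spt x)"
  have finS: "finite ?S" using a x by (simp add: ga_iff)
  have "conv (conv a x) u g = Sum_any (\<lambda>m. conv a x m * u (- m + g))"
    by (simp add: conv_SA ga_conv a x)
  also have "\<dots> = Sum_any (\<lambda>m. Sum_any (\<lambda>h. a h * x (- h + m) * u (- m + g)))"
  proof (rule Sum_any.cong)
    fix m
    have f: "finite {h. a h * x (- h + m) \<noteq> 0}"
      using a by (rule_tac finite_subset[of _ "spt a"]) (auto simp: ga_iff spt_def)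
    show "conv a x m * u (- m + g) = Sum_any (\<lambda>h. a h * x (- h + m) * u (- m + g))"
      by (simp add: conv_SA a Sum_any_left_distrib[OF f])
  qed
  also have "\<dots> = Sum_any (\<lambda>h. Sum_any (\<lambda>m. a h * x (- h + m) * u (- m + g)))"
  proof (rule Sum_any.swap[of "?S \<times> spt a"])
    show "finite (?S \<times> spt a)" using finS a by (simp add: ga_iff)
    show "{m. \<exists>h. a h * x (- h + m) * u (- m + g) \<noteq> 0} \<times> {h. \<exists>m. a h * x (- h + m) * u (- m + g) \<noteq> 0}
          \<subseteq> ?S \<times> spt a"
    proof clarify
      fix m h m' h'
      assume 1: "a h * x (- h + m) * u (- m + g) \<noteq> 0" and 2: "a h' * x (- h' + m') * u (- m' + g) \<noteq> 0"
      have "(h, - h + m) \<in> spt a \<times> spt x" using 1 by (simp add: spt_def)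
      then have "m \<in> ?S" by (rule rev_image_eqI) (simp add: add.assoc[symmetric])
      moreover have "h' \<in> spt a" using 2 by (simp add: spt_def)
      ultimately show "m \<in> ?S \<and> h' \<in> spt a" by simp
    qed
  qed
  also have "\<dots> = Sum_any (\<lambda>h. a h * Sum_any (\<lambda>k. x k * u (- k + (- h + g))))"
  proof (rule Sum_any.cong)
    fix h
    have f: "finite {k. x k * u (- k + (- h + g)) \<noteq> 0}"
      using x by (rule_tac finite_subset[of _ "spt x"]) (auto simp: ga_iff spt_def)
    have "Sum_any (\<lambda>m. a h * x (- h + m) * u (- m + g)) = Sum_any (\<lambda>k. a h * x k * u (- k + (- h + g)))"
    proof (rule Sum_any.reindex_cong[where l = "\<lambda>k. h + k"])
      show "bij ((+) h)" by (rule bijI) (auto simp: inj_def surj_def intro: exI[of _ "- h + _"])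
      show "(\<lambda>m. a h * x (- h + m) * u (- m + g)) \<circ> (+) h = (\<lambda>k. a h * x k * u (- k + (- h + g)))"
        by (simp add: fun_eq_iff add.assoc[symmetric] minus_add)
    qed
    also have "\<dots> = a h * Sum_any (\<lambda>k. x k * u (- k + (- h + g)))"
      by (simp add: Sum_any_right_distrib[OF f] mult.assoc)
    finally show "Sum_any (\<lambda>m. a h * x (- h + m) * u (- m + g)) = a h * Sum_any (\<lambda>k. x k * u (- k + (- h + g)))" .
  qed
  also have "\<dots> = conv a (conv x u) g"
    by (simp add: conv_SA a x)
  finally show "conv (conv a x) u g = conv a (conv x u) g" .
qed


lemma fin_sub: "finite (spt a) \<Longrightarrow> (\<And>g. f g \<noteq> 0 \<Longrightarrow> a g \<noteq> 0) \<Longrightarrow> finite {g. f g \<noteq> 0}"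
  by (rule finite_subset[of _ "spt a"]) (auto simp: spt_def)

lemma ip_sum: "finite A \<Longrightarrow> spt x \<subseteq> A \<Longrightarrow> ip x y = (\<Sum>g\<in>A. x g * cnj (y g))"
  unfolding ip_def by (rule Sum_any.expand_superset) (auto simp: spt_def)

lemma nsq_sum: "finite A \<Longrightarrow> spt x \<subseteq> A \<Longrightarrow> nsq x = (\<Sum>g\<in>A. (cmod (x g))^2)"
  unfolding nsq_def by (rule Sum_any.expand_superset) (auto simp: spt_def)

lemma nsq_nonneg: "nsq x \<ge> 0"
  unfolding nsq_def Sum_any.expand_set by (rule sum_nonneg) simp

lemma ip_self: assumes "x \<in> group_alg" shows "ip x x = complex_of_real (nsq x)"
proof -
  have "ip x x = (\<Sum>g\<in>spt x. x g * cnj (x g))"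
    by (rule ip_sum) (use assms in \<open>auto simp: ga_iff\<close>)
  also have "\<dots> = (\<Sum>g\<in>spt x. complex_of_real ((cmod (x g))^2))"
    by (rule sum.cong) (simp_all only: complex_norm_square)
  also have "\<dots> = complex_of_real (nsq x)"
    using assms by (simp add: nsq_sum[of "spt x"] ga_iff)
  finally show ?thesis .
qed

lemma ip_add_left:
  assumes "x \<in> group_alg" "y \<in> group_alg"
  shows "ip (\<lambda>g. x g + y g) w = ip x w + ip y w"
proof -
  have f1: "finite {g. x g * cnj (w g) \<noteq> 0}" using assms(1) by (rule_tac fin_sub[of x]) (auto simp: ga_iff)
  have f2: "finite {g. y g * cnj (w g) \<noteq> 0}" using assms(2) by (rule_tac fin_sub[of y]) (auto simp: ga_iff)
  show ?thesis using Sum_any.distrib[OF f1 f2] by (simp add: ip_def distrib_right)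
qed

lemma ip_smult_left:
  assumes "x \<in> group_alg"
  shows "ip (\<lambda>g. c * x g) w = c * ip x w"
proof -
  have f1: "finite {g. x g * cnj (w g) \<noteq> 0}" using assms(1) by (rule_tac fin_sub[of x]) (auto simp: ga_iff)
  show ?thesis using Sum_any_right_distrib[OF f1, of c] by (simp add: ip_def mult.assoc)
qed

lemma ga_sum: "finite I \<Longrightarrow> (\<And>i. i \<in> I \<Longrightarrow> f i \<in> group_alg) \<Longrightarrow> (\<lambda>g. \<Sum>i\<in>I. f i g) \<in> group_alg"
proof (induction I rule: finite_induct)
  case empty then show ?case by simp
next
  case (insert i I)
  then show ?case using ga_add[of "f i" "\<lambda>g. \<Sum>i\<in>I. f i g"] by simp
qed

lemma ip_sum_left: "finite I \<Longrightarrow> (\<And>i. i \<in> I \<Longrightarrow> f i \<in> group_alg) \<Longrightarrow>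
   ip (\<lambda>g. \<Sum>i\<in>I. f i g) w = (\<Sum>i\<in>I. ip (f i) w)"
proof (induction I rule: finite_induct)
  case empty then show ?case by (simp add: ip_def)
next
  case (insert i I)
  have "ip (\<lambda>g. \<Sum>i\<in>insert i I. f i g) w = ip (\<lambda>g. f i g + (\<Sum>i\<in>I. f i g)) w"
    using insert by simp
  also have "\<dots> = ip (f i) w + ip (\<lambda>g. \<Sum>i\<in>I. f i g) w"
    using insert by (intro ip_add_left ga_sum) auto
  finally show ?case using insert by simp
qed

lemma cnj_Sum_any: "cnj (Sum_any f) = Sum_any (\<lambda>g. cnj (f g))"
  unfolding Sum_any.expand_set by (simp add: cnj_sum)

lemma ip_cnj: "ip x y = cnj (ip y x)"
  by (simp add: ip_def cnj_Sum_any mult.commute)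

lemma tr_tr: "tr g (tr h u) = tr (g + h) u"
  by (simp only: tr_def minus_add add.assoc)

lemma tr_0[simp]: "tr 0 u = u" by (simp add: tr_def)

lemma bij_plus: "bij (\<lambda>k::'g::group_add. h + k)"
  by (rule bijI) (auto simp: inj_def surj_def intro: exI[of _ "- h + _"])

lemma ip_tr: "ip (tr k x) (tr k y) = ip x y"
  unfolding ip_def
  by (rule Sum_any.reindex_cong[where l = "\<lambda>g. k + g", OF bij_plus])
     (simp add: fun_eq_iff tr_def add.assoc[symmetric])

lemma ip_dl: "ip (dl a \<alpha>) (dl b \<beta>) = (if a = b then \<alpha> * cnj \<beta> else 0)"
proof -
  have "ip (dl a \<alpha>) (dl b \<beta>) = (\<Sum>g\<in>{a}. dl a \<alpha> g * cnj (dl b \<beta> g))"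
    by (rule ip_sum) (auto simp: spt_def dl_def)
  then show ?thesis by (simp add: dl_def)
qed

lemma tr_dl: "tr k (dl a \<alpha>) = dl (k + a) \<alpha>"
proof -
  have "(- k + g = a) \<longleftrightarrow> (g = k + a)" for g
    by (metis add_minus_cancel minus_add_cancel)
  then show ?thesis by (simp add: tr_def dl_def fun_eq_iff)
qed

lemma ip_conv_left:
  assumes "x \<in> group_alg" "u \<in> group_alg"
  shows "ip (conv x u) w = (\<Sum>g\<in>spt x. x g * ip (tr g u) w)"
proof -
  have "ip (conv x u) w = (\<Sum>g\<in>spt x. ip (\<lambda>k. x g * tr g u k) w)"
    unfolding conv_sum
  proof (rule ip_sum_left)
    show "finite (spt x)" using assms by (simp add: ga_iff)
    show "\<And>i. i \<in> spt x \<Longrightarrow> (\<lambda>k. x i * tr i u k) \<in> group_alg"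
      by (rule ga_smult, rule ga_tr, rule assms(2))
  qed
  also have "\<dots> = (\<Sum>g\<in>spt x. x g * ip (tr g u) w)"
    using assms by (intro sum.cong refl ip_smult_left ga_tr)
  finally show ?thesis .
qed

lemma ip_tr_move: "ip (tr g u) (tr h v) = ip (tr (- h + g) u) v"
proof -
  have "ip (tr g u) (tr h v) = ip (tr (- h) (tr g u)) (tr (- h) (tr h v))" by (simp add: ip_tr)
  then show ?thesis by (simp add: tr_tr)
qed

lemma ip_conv_conv:
  assumes "x \<in> group_alg" "y \<in> group_alg" "u \<in> group_alg"
  shows "ip (conv x u) (conv y u) =
    (\<Sum>g\<in>spt x. \<Sum>h\<in>spt y. x g * cnj (y h) * ip (tr (- h + g) u) u)"
proof -
  have "ip (conv x u) (conv y u) = (\<Sum>g\<in>spt x. x g * ip (tr g u) (conv y u))"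
    using assms by (simp add: ip_conv_left)
  also have "\<dots> = (\<Sum>g\<in>spt x. \<Sum>h\<in>spt y. x g * cnj (y h) * ip (tr (- h + g) u) u)"
  proof (rule sum.cong[OF refl])
    fix g
    have "ip (tr g u) (conv y u) = cnj (ip (conv y u) (tr g u))" by (rule ip_cnj)
    also have "\<dots> = cnj (\<Sum>h\<in>spt y. y h * ip (tr h u) (tr g u))" using assms by (simp add: ip_conv_left)
    also have "\<dots> = (\<Sum>h\<in>spt y. cnj (y h) * ip (tr g u) (tr h u))"
      by (simp add: cnj_sum ip_cnj[of "tr g u"])
    also have "\<dots> = (\<Sum>h\<in>spt y. cnj (y h) * ip (tr (- h + g) u) u)"
      by (simp add: ip_tr_move)
    finally show "x g * ip (tr g u) (conv y u) = (\<Sum>h\<in>spt y. x g * cnj (y h) * ip (tr (- h + g) u) u)"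
      by (simp add: sum_distrib_left mult.assoc)
  qed
  finally show ?thesis .
qed

lemma spt_inv_star: "spt (inv_star a) = uminus ` spt a"
proof -
  have "g \<in> spt (inv_star a) \<longleftrightarrow> g \<in> uminus ` spt a" for g
    by (auto simp: spt_def inv_star_def image_iff intro: exI[of _ "- g"])
  then show ?thesis by blast
qed

lemma ip_conv_adj:
  assumes a: "a \<in> group_alg" and x: "x \<in> group_alg" and y: "y \<in> group_alg"
  shows "ip (conv a x) y = ip x (conv (inv_star a) y)"
proof -
  have "ip x (conv (inv_star a) y) = cnj (ip (conv (inv_star a) y) x)" by (rule ip_cnj)
  also have "\<dots> = cnj (\<Sum>k\<in>spt (inv_star a). inv_star a k * ip (tr k y) x)"
    using a y by (simp add: ip_conv_left ga_inv_star)
  also have "\<dots> = (\<Sum>k\<in>uminus ` spt a. a (- k) * ip x (tr k y))"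
    by (simp only: spt_inv_star) (simp add: cnj_sum inv_star_def ip_cnj[of x])
  also have "\<dots> = (\<Sum>h\<in>spt a. a h * ip x (tr (- h) y))"
    by (subst sum.reindex) (auto simp: inj_on_def)
  also have "\<dots> = (\<Sum>h\<in>spt a. a h * ip (tr h x) y)"
  proof (rule sum.cong[OF refl])
    fix h
    have "ip (tr h x) y = ip (tr (- h) (tr h x)) (tr (- h) y)" by (simp add: ip_tr)
    then show "a h * ip x (tr (- h) y) = a h * ip (tr h x) y" by (simp add: tr_tr)
  qed
  also have "\<dots> = ip (conv a x) y" using a x by (simp add: ip_conv_left)
  finally show ?thesis by simp
qed

lemma l2_ga:
  assumes "x \<in> group_alg"
  shows "x \<in> l2" "l2norm x = sqrt (nsq x)"
proof -
  have f: "finite (spt x)" using assms by (simp add: ga_iff)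
  have "(\<lambda>g. (cmod (x g))^2) summable_on spt x" using f by simp
  moreover have "(\<lambda>g. (cmod (x g))^2) summable_on spt x \<longleftrightarrow> (\<lambda>g. (cmod (x g))^2) summable_on UNIV"
    by (rule summable_on_cong_neutral) (auto simp: spt_def)
  ultimately show "x \<in> l2" unfolding l2_def by simp
  have "(\<Sum>\<^sub>\<infinity>g. (cmod (x g))^2) = (\<Sum>\<^sub>\<infinity>g\<in>spt x. (cmod (x g))^2)"
    by (rule infsum_cong_neutral) (auto simp: spt_def)
  also have "\<dots> = nsq x" using f by (simp add: nsq_sum)
  finally show "l2norm x = sqrt (nsq x)" by (simp add: l2norm_def)
qed

lemma ip_CS:
  assumes "x \<in> group_alg" "y \<in> group_alg"
  shows "cmod (ip x y) \<le> sqrt (nsq x) * sqrt (nsq y)"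
proof -
  define A where "A = spt x \<union> spt y"
  have fA: "finite A" using assms by (simp add: A_def ga_iff)
  have nx: "nsq x = (\<Sum>g\<in>A. (cmod (x g))^2)" by (rule nsq_sum[OF fA]) (auto simp: A_def)
  have ny: "nsq y = (\<Sum>g\<in>A. (cmod (y g))^2)" by (rule nsq_sum[OF fA]) (auto simp: A_def)
  have "ip x y = (\<Sum>g\<in>A. x g * cnj (y g))" by (rule ip_sum[OF fA]) (auto simp: A_def)
  then have "cmod (ip x y) = cmod (\<Sum>g\<in>A. x g * cnj (y g))" by simp
  also have "\<dots> \<le> (\<Sum>g\<in>A. \<bar>cmod (x g)\<bar> * \<bar>cmod (y g)\<bar>)"
    by (rule order_trans[OF norm_sum]) (simp add: norm_mult)
  also have "\<dots> \<le> L2_set (\<lambda>g. cmod (x g)) A * L2_set (\<lambda>g. cmod (y g)) A" by (rule L2_set_mult_ineq)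
  also have "\<dots> = sqrt (nsq x) * sqrt (nsq y)"
    by (simp add: L2_set_def nx ny)
  finally show ?thesis .
qed

lemma nsq_triangle:
  assumes "x \<in> group_alg" "y \<in> group_alg"
  shows "sqrt (nsq (\<lambda>g. x g + y g)) \<le> sqrt (nsq x) + sqrt (nsq y)"
proof -
  define A where "A = spt x \<union> spt y"
  have fA: "finite A" using assms by (simp add: A_def ga_iff)
  have nx: "nsq x = (\<Sum>g\<in>A. (cmod (x g))^2)" by (rule nsq_sum[OF fA]) (auto simp: A_def)
  have ny: "nsq y = (\<Sum>g\<in>A. (cmod (y g))^2)" by (rule nsq_sum[OF fA]) (auto simp: A_def)
  have nxy: "nsq (\<lambda>g. x g + y g) = (\<Sum>g\<in>A. (cmod (x g + y g))^2)"
    by (rule nsq_sum[OF fA]) (auto simp: A_def spt_def)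
  have "sqrt (nsq (\<lambda>g. x g + y g)) = L2_set (\<lambda>g. cmod (x g + y g)) A"
    by (simp add: nxy L2_set_def)
  also have "\<dots> \<le> L2_set (\<lambda>g. cmod (x g) + cmod (y g)) A"
    by (rule L2_set_mono) (auto simp: norm_triangle_ineq)
  also have "\<dots> \<le> L2_set (\<lambda>g. cmod (x g)) A + L2_set (\<lambda>g. cmod (y g)) A"
    by (rule L2_set_triangle_ineq)
  also have "\<dots> = sqrt (nsq x) + sqrt (nsq y)"
    by (simp add: L2_set_def nx ny)
  finally show ?thesis .
qed


lemma cnt_lim:
  fixes j :: int
  shows "(\<lambda>N. real (card {m. m < N \<and> 0 \<le> j + int m \<and> j + int m < int N}) / real N) \<longlonglongrightarrow> 1"
proof (rule tendsto_sandwich[where f = "\<lambda>N. (real N - 2 * real (nat \<bar>j\<bar>)) / real N" and h = "\<lambda>N. 1"])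
  define a where "a = nat \<bar>j\<bar>"
  show "(\<lambda>N. (real N - 2 * real (nat \<bar>j\<bar>)) / real N) \<longlonglongrightarrow> 1" by real_asymp
  show "((\<lambda>N. 1) \<longlongrightarrow> 1) sequentially" by simp
  show "\<forall>\<^sub>F N in sequentially. real (card {m. m < N \<and> 0 \<le> j + int m \<and> j + int m < int N}) / real N \<le> 1"
  proof (rule eventually_sequentiallyI[of 1])
    fix N :: nat assume "1 \<le> N"
    have "card {m. m < N \<and> 0 \<le> j + int m \<and> j + int m < int N} \<le> card {..<N}"
      by (rule card_mono) auto
    then show "real (card {m. m < N \<and> 0 \<le> j + int m \<and> j + int m < int N}) / real N \<le> 1"
      using \<open>1 \<le> N\<close> by (simp add: divide_le_eq_1)
  qed
  show "\<forall>\<^sub>F N in sequentially. (real N - 2 * real (nat \<bar>j\<bar>)) / real N \<le>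
           real (card {m. m < N \<and> 0 \<le> j + int m \<and> j + int m < int N}) / real N"
  proof (rule eventually_sequentiallyI[of 1])
    fix N :: nat assume "1 \<le> N"
    have sub: "{a..<N - a} \<subseteq> {m. m < N \<and> 0 \<le> j + int m \<and> j + int m < int N}"
      by (auto simp: a_def)
    have "N - a - a \<le> card {m. m < N \<and> 0 \<le> j + int m \<and> j + int m < int N}"
      using card_mono[OF _ sub] by simp
    then have "real N - 2 * real a \<le> real (card {m. m < N \<and> 0 \<le> j + int m \<and> j + int m < int N})"
      by linarith
    then show "(real N - 2 * real (nat \<bar>j\<bar>)) / real N \<le>
           real (card {m. m < N \<and> 0 \<le> j + int m \<and> j + int m < int N}) / real N"
      using \<open>1 \<le> N\<close> by (simp add: a_def divide_right_mono)
  qed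
qed

context cz
begin

definition phi :: "complex \<Rightarrow> 'g \<Rightarrow> complex" where
  "phi \<omega> k = (if k \<in> range zm then \<omega> powi (inv zm k) else 0)"

lemma phi_zm: "phi \<omega> (zm j) = \<omega> powi j"
  by (simp add: phi_def inv_f_f[OF inj_zm])

lemma phi_notin: "k \<notin> range zm \<Longrightarrow> phi \<omega> k = 0"
  by (simp add: phi_def)

lemma phi_shift:
  assumes "\<omega> \<noteq> 0"
  shows "phi \<omega> (zm i + k) = \<omega> powi i * phi \<omega> k"
proof (cases "k \<in> range zm")
  case True
  then obtain j where "k = zm j" by blast
  then show ?thesis using assms by (simp add: phi_zm zm_add[symmetric] power_int_add)
next
  case False
  have "zm i + k \<notin> range zm"
  proof
    assume "zm i + k \<in> range zm"
    then obtain m where "zm i + k = zm m" by blast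
    then have "k = - zm i + zm m" by (metis minus_add_cancel)
    then have "k = zm (- i + m)" by (simp only: zm_add zm_neg)
    then show False using False by blast
  qed
  then show ?thesis using False by (simp add: phi_notin)
qed

definition uN :: "complex \<Rightarrow> nat \<Rightarrow> 'g \<Rightarrow> complex" where
  "uN \<omega> N = (\<lambda>g. \<Sum>n<N. dl (zm (int n)) (cnj \<omega> ^ n) g)"

lemma ga_uN: "uN \<omega> N \<in> group_alg"
  unfolding uN_def by (rule ga_sum) (auto intro: ga_dl)

definition psi :: "complex \<Rightarrow> nat \<Rightarrow> 'g \<Rightarrow> complex" where
  "psi \<omega> N k = ip (tr k (uN \<omega> N)) (uN \<omega> N)"

lemma psi_formula:
  "psi \<omega> N k = (\<Sum>m<N. \<Sum>n<N. if k + zm (int m) = zm (int n) then cnj \<omega> ^ m * \<omega> ^ n else 0)"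
proof -
  have t: "tr k (uN \<omega> N) = (\<lambda>g. \<Sum>m<N. dl (k + zm (int m)) (cnj \<omega> ^ m) g)"
  proof -
    have e: "dl a c (- k + g) = dl (k + a) c g" for a c g
      using fun_cong[OF tr_dl[of k a c], of g] by (simp add: tr_def)
    show ?thesis by (simp add: uN_def tr_def e)
  qed
  have "psi \<omega> N k = (\<Sum>m<N. ip (dl (k + zm (int m)) (cnj \<omega> ^ m)) (uN \<omega> N))"
    unfolding psi_def t by (rule ip_sum_left) (auto intro: ga_dl)
  also have "\<dots> = (\<Sum>m<N. \<Sum>n<N. if k + zm (int m) = zm (int n) then cnj \<omega> ^ m * \<omega> ^ n else 0)"
  proof (rule sum.cong[OF refl])
    fix m
    have "ip (dl (k + zm (int m)) (cnj \<omega> ^ m)) (uN \<omega> N) = cnj (ip (uN \<omega> N) (dl (k + zm (int m)) (cnj \<omega> ^ m)))"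
      by (rule ip_cnj)
    also have "\<dots> = cnj (\<Sum>n<N. ip (dl (zm (int n)) (cnj \<omega> ^ n)) (dl (k + zm (int m)) (cnj \<omega> ^ m)))"
      unfolding uN_def by (subst ip_sum_left) (auto intro: ga_dl)
    also have "\<dots> = (\<Sum>n<N. if k + zm (int m) = zm (int n) then cnj \<omega> ^ m * \<omega> ^ n else 0)"
      by (auto simp: cnj_sum ip_dl mult.commute intro!: sum.cong)
    finally show "ip (dl (k + zm (int m)) (cnj \<omega> ^ m)) (uN \<omega> N) =
       (\<Sum>n<N. if k + zm (int m) = zm (int n) then cnj \<omega> ^ m * \<omega> ^ n else 0)" .
  qed
  finally show ?thesis .
qed

lemma psi_zm:
  assumes w: "cmod \<omega> = 1"
  shows "psi \<omega> N (zm j) = \<omega> powi j * of_nat (card {m. m < N \<and> 0 \<le> j + int m \<and> j + int m < int N})"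
proof -
  have w0: "\<omega> \<noteq> 0" using w by auto
  have cw: "cnj \<omega> * \<omega> = 1" using w by (simp add: complex_norm_square[symmetric] mult.commute)
  have inner: "(\<Sum>n<N. if zm j + zm (int m) = zm (int n) then cnj \<omega> ^ m * \<omega> ^ n else 0) =
      (if 0 \<le> j + int m \<and> j + int m < int N then \<omega> powi j else 0)" for m
  proof -
    have iff: "zm j + zm (int m) = zm (int n) \<longleftrightarrow> (n = nat (j + int m) \<and> 0 \<le> j + int m)" for n
    proof -
      have "zm j + zm (int m) = zm (int n) \<longleftrightarrow> j + int m = int n" by (simp only: zm_add[symmetric] zm_inj)
      also have "\<dots> \<longleftrightarrow> (n = nat (j + int m) \<and> 0 \<le> j + int m)" by auto
      finally show ?thesis .
    qed
    have "(\<Sum>n<N. if zm j + zm (int m) = zm (int n) then cnj \<omega> ^ m * \<omega> ^ n else 0) =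
        (\<Sum>n<N. if n = nat (j + int m) \<and> 0 \<le> j + int m then cnj \<omega> ^ m * \<omega> ^ n else 0)"
      by (simp only: iff)
    also have "\<dots> = (if 0 \<le> j + int m \<and> j + int m < int N then cnj \<omega> ^ m * \<omega> ^ nat (j + int m) else 0)"
    proof (cases "0 \<le> j + int m")
      case True
      then have "(\<Sum>n<N. if n = nat (j + int m) \<and> 0 \<le> j + int m then cnj \<omega> ^ m * \<omega> ^ n else 0)
          = (\<Sum>n<N. if n = nat (j + int m) then cnj \<omega> ^ m * \<omega> ^ n else 0)" by simp
      also have "\<dots> = (if nat (j + int m) \<in> {..<N} then cnj \<omega> ^ m * \<omega> ^ nat (j + int m) else 0)"
        by (rule sum.delta) simp
      finally show ?thesis using True by auto
    next
      case False then show ?thesis by simp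
    qed
    also have "\<dots> = (if 0 \<le> j + int m \<and> j + int m < int N then \<omega> powi j else 0)"
    proof -
      have "0 \<le> j + int m \<Longrightarrow> cnj \<omega> ^ m * \<omega> ^ nat (j + int m) = \<omega> powi j"
      proof -
        assume h: "0 \<le> j + int m"
        have "\<omega> ^ nat (j + int m) = \<omega> powi (j + int m)" using h by (simp add: power_int_def)
        also have "\<dots> = \<omega> powi j * \<omega> ^ m" using w0 by (simp add: power_int_add)
        finally show ?thesis using cw
          by (simp add: mult.assoc mult.left_commute[of "cnj \<omega> ^ m"] power_mult_distrib[symmetric])
      qed
      then show ?thesis by simp
    qed
    finally show ?thesis .
  qed
  have "psi \<omega> N (zm j) = (\<Sum>m<N. if 0 \<le> j + int m \<and> j + int m < int N then \<omega> powi j else 0)"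
    by (simp add: psi_formula inner)
  also have "\<dots> = (\<Sum>m\<in>{m. m < N \<and> 0 \<le> j + int m \<and> j + int m < int N}. \<omega> powi j)"
  proof -
    have "{m. m < N \<and> 0 \<le> j + int m \<and> j + int m < int N} = {m \<in> {..<N}. 0 \<le> j + int m \<and> j + int m < int N}" by auto
    then show ?thesis by (simp only: sum.inter_filter[OF finite_lessThan])
  qed
  also have "\<dots> = \<omega> powi j * of_nat (card {m. m < N \<and> 0 \<le> j + int m \<and> j + int m < int N})"
    by (simp add: mult.commute)
  finally show ?thesis .
qed

lemma psi_notin:
  assumes "k \<notin> range zm"
  shows "psi \<omega> N k = 0"
proof -
  have "k + zm (int m) \<noteq> zm (int n)" for m n
  proof
    assume "k + zm (int m) = zm (int n)"
    then have "k + zm (int m) + - zm (int m) = zm (int n) + - zm (int m)" by simp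
    then have "k = zm (int n) + - zm (int m)" by (simp add: add.assoc)
    then have "k = zm (int n + - int m)" by (simp only: zm_add zm_neg)
    then show False using assms by blast
  qed
  then show ?thesis by (simp add: psi_formula)
qed

lemma psi_lim:
  assumes w: "cmod \<omega> = 1"
  shows "(\<lambda>N. psi \<omega> N k / of_nat N) \<longlonglongrightarrow> phi \<omega> k"
proof (cases "k \<in> range zm")
  case True
  then obtain j where k: "k = zm j" by blast
  have "(\<lambda>N. \<omega> powi j * complex_of_real (real (card {m. m < N \<and> 0 \<le> j + int m \<and> j + int m < int N}) / real N))
      \<longlonglongrightarrow> \<omega> powi j * complex_of_real 1"
    by (intro tendsto_mult tendsto_const tendsto_of_real cnt_lim)
  then show ?thesis using w by (simp add: k psi_zm phi_zm)
next
  case False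
  then show ?thesis by (simp add: psi_notin phi_notin)
qed

definition B :: "complex \<Rightarrow> ('g \<Rightarrow> complex) \<Rightarrow> ('g \<Rightarrow> complex) \<Rightarrow> complex" where
  "B \<omega> x y = (\<Sum>g\<in>spt x. \<Sum>h\<in>spt y. x g * cnj (y h) * phi \<omega> (- h + g))"

lemma B_lim:
  assumes w: "cmod \<omega> = 1" and x: "x \<in> group_alg" and y: "y \<in> group_alg"
  shows "(\<lambda>N. ip (conv x (uN \<omega> N)) (conv y (uN \<omega> N)) / of_nat N) \<longlonglongrightarrow> B \<omega> x y"
proof -
  have eq: "ip (conv x (uN \<omega> N)) (conv y (uN \<omega> N)) / of_nat N =
     (\<Sum>g\<in>spt x. \<Sum>h\<in>spt y. x g * cnj (y h) * (psi \<omega> N (- h + g) / of_nat N))" for N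
    by (simp add: ip_conv_conv x y ga_uN psi_def sum_divide_distrib)
  show ?thesis unfolding eq B_def
    by (intro tendsto_sum tendsto_mult tendsto_const psi_lim w)
qed

end

lemma nsq_scale:
  assumes "x \<in> group_alg"
  shows "nsq (\<lambda>g. c * x g) = (cmod c)^2 * nsq x"
proof -
  have f: "finite (spt x)" using assms by (simp add: ga_iff)
  have "nsq (\<lambda>g. c * x g) = (\<Sum>g\<in>spt x. (cmod (c * x g))^2)"
    by (rule nsq_sum[OF f]) (auto simp: spt_def)
  also have "\<dots> = (cmod c)^2 * (\<Sum>g\<in>spt x. (cmod (x g))^2)"
    by (simp add: sum_distrib_left norm_mult power_mult_distrib)
  also have "\<dots> = (cmod c)^2 * nsq x" by (simp add: nsq_sum[OF f])
  finally show ?thesis .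
qed

lemma conv_smult_right: "conv a (\<lambda>g. c * \<xi> g) = (\<lambda>g. c * conv a \<xi> g)"
  by (simp add: conv_def sum_distrib_left mult.left_commute)

lemma sq_sum_bound:
  fixes w t :: "'a \<Rightarrow> real"
  assumes "\<And>i. w i \<ge> 0"
  shows "(\<Sum>i\<in>I. w i * t i)^2 \<le> (\<Sum>i\<in>I. w i) * (\<Sum>i\<in>I. w i * (t i)^2)"
proof -
  have "(\<Sum>i\<in>I. sqrt (w i) * (sqrt (w i) * t i))^2 \<le> (\<Sum>i\<in>I. (sqrt (w i))^2) * (\<Sum>i\<in>I. (sqrt (w i) * t i)^2)"
    by (rule Cauchy_Schwarz_ineq_sum)
  moreover have "sqrt (w i) * (sqrt (w i) * t i) = w i * t i" for i
    using assms[of i] by (simp add: mult.assoc[symmetric])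
  moreover have "(sqrt (w i) * t i)^2 = w i * (t i)^2" for i
    using assms[of i] by (simp add: power_mult_distrib)
  ultimately show ?thesis using assms by simp
qed

lemma conv_l2_bound:
  fixes a :: "'g::group_add \<Rightarrow> complex"
  assumes a: "a \<in> group_alg" and x: "\<xi> \<in> l2"
  shows "l2norm (conv a \<xi>) \<le> (\<Sum>h\<in>spt a. cmod (a h)) * l2norm \<xi>"
proof -
  define A where "A = (\<Sum>h\<in>spt a. cmod (a h))"
  define S where "S = (\<Sum>\<^sub>\<infinity>g. (cmod (\<xi> g))^2)"
  have A0: "A \<ge> 0" by (simp add: A_def sum_nonneg)
  have S0: "S \<ge> 0" by (simp add: S_def infsum_nonneg)
  have xs: "(\<lambda>g. (cmod (\<xi> g))^2) summable_on UNIV" using x by (simp add: l2_def)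
  have pt: "(cmod (conv a \<xi> g))^2 \<le> A * (\<Sum>h\<in>spt a. cmod (a h) * (cmod (\<xi> (- h + g)))^2)" for g
  proof -
    have "cmod (conv a \<xi> g) \<le> (\<Sum>h\<in>spt a. cmod (a h) * cmod (\<xi> (- h + g)))"
      unfolding conv_sum tr_def by (rule order_trans[OF norm_sum]) (simp add: norm_mult)
    then have "(cmod (conv a \<xi> g))^2 \<le> (\<Sum>h\<in>spt a. cmod (a h) * cmod (\<xi> (- h + g)))^2"
      by (simp add: power_mono)
    also have "\<dots> \<le> A * (\<Sum>h\<in>spt a. cmod (a h) * (cmod (\<xi> (- h + g)))^2)"
      unfolding A_def by (rule sq_sum_bound) simp
    finally show ?thesis .
  qed
  have main: "(\<Sum>\<^sub>\<infinity>g. (cmod (conv a \<xi> g))^2) \<le> A * A * S"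
  proof (cases "(\<lambda>g. (cmod (conv a \<xi> g))^2) summable_on UNIV")
    case False
    then show ?thesis using A0 S0 by (simp add: infsum_not_exists)
  next
    case True
    show ?thesis
    proof (rule infsum_le_finite_sums[OF True])
      fix F :: "'g set" assume F: "finite F"
      have "(\<Sum>g\<in>F. (cmod (conv a \<xi> g))^2) \<le> (\<Sum>g\<in>F. A * (\<Sum>h\<in>spt a. cmod (a h) * (cmod (\<xi> (- h + g)))^2))"
        by (rule sum_mono) (rule pt)
      also have "\<dots> = A * (\<Sum>h\<in>spt a. cmod (a h) * (\<Sum>g\<in>F. (cmod (\<xi> (- h + g)))^2))"
        by (simp add: sum_distrib_left sum.swap[of _ F] mult.assoc)
      also have "\<dots> \<le> A * (\<Sum>h\<in>spt a. cmod (a h) * S)"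
      proof (intro mult_left_mono A0 sum_mono mult_left_mono norm_ge_zero)
        fix h
        have "(\<Sum>g\<in>F. (cmod (\<xi> (- h + g)))^2) = (\<Sum>k\<in>(\<lambda>g. - h + g) ` F. (cmod (\<xi> k))^2)"
          by (subst sum.reindex) (auto simp: inj_on_def)
        also have "\<dots> \<le> S" unfolding S_def
          by (rule finite_sum_le_infsum[OF xs]) (use F in auto)
        finally show "(\<Sum>g\<in>F. (cmod (\<xi> (- h + g)))^2) \<le> S" .
      qed
      also have "\<dots> = A * A * S" by (simp add: A_def sum_distrib_right mult.assoc)
      finally show "(\<Sum>g\<in>F. (cmod (conv a \<xi> g))^2) \<le> A * A * S" .
    qed
  qed
  have "l2norm (conv a \<xi>) \<le> sqrt (A * A * S)"
    unfolding l2norm_def by (rule real_sqrt_le_mono[OF main])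
  also have "\<dots> = A * l2norm \<xi>" using A0 S0 by (simp add: l2norm_def S_def real_sqrt_mult)
  finally show ?thesis by (simp add: A_def)
qed

lemma rn_bdd:
  assumes a: "a \<in> group_alg"
  shows "bdd_above {l2norm (conv a \<xi>) |\<xi>. \<xi> \<in> l2 \<and> l2norm \<xi> \<le> 1}"
proof (rule bdd_aboveI)
  fix r assume "r \<in> {l2norm (conv a \<xi>) |\<xi>. \<xi> \<in> l2 \<and> l2norm \<xi> \<le> 1}"
  then obtain \<xi> where r: "r = l2norm (conv a \<xi>)" "\<xi> \<in> l2" "l2norm \<xi> \<le> 1" by blast
  have "r \<le> (\<Sum>h\<in>spt a. cmod (a h)) * l2norm \<xi>" using conv_l2_bound[OF a r(2)] r(1) by simp
  also have "\<dots> \<le> (\<Sum>h\<in>spt a. cmod (a h)) * 1"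
    by (rule mult_left_mono[OF r(3)]) (simp add: sum_nonneg)
  finally show "r \<le> (\<Sum>h\<in>spt a. cmod (a h))" by simp
qed

lemma rn_upper:
  assumes a: "a \<in> group_alg" and "\<xi> \<in> l2" "l2norm \<xi> \<le> 1"
  shows "l2norm (conv a \<xi>) \<le> reduced_norm a"
  unfolding reduced_norm_def by (rule cSup_upper[OF _ rn_bdd[OF a]]) (use assms in blast)

lemma nsq_zero_iff:
  assumes "x \<in> group_alg"
  shows "nsq x = 0 \<longleftrightarrow> x = (\<lambda>_. 0)"
proof
  assume h: "nsq x = 0"
  have f: "finite (spt x)" using assms by (simp add: ga_iff)
  have "\<forall>g\<in>spt x. (cmod (x g))^2 = 0"
    using h by (subst (asm) nsq_sum[OF f]) (auto simp: sum_nonneg_eq_0_iff[OF f])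
  then show "x = (\<lambda>_. 0)" by (auto simp: spt_def fun_eq_iff)
qed (simp add: nsq_def)

lemma rn_nonneg:
  assumes a: "a \<in> group_alg"
  shows "0 \<le> reduced_norm a"
proof -
  have "l2norm (conv a (\<lambda>_. 0)) \<le> reduced_norm a"
    by (rule rn_upper[OF a]) (simp_all add: l2_ga nsq_def)
  moreover have "l2norm (conv a (\<lambda>_. 0)) = 0" by (simp add: conv_def l2norm_def)
  ultimately show ?thesis by simp
qed

lemma rn_bound:
  assumes a: "a \<in> group_alg" and x: "\<xi> \<in> group_alg"
  shows "sqrt (nsq (conv a \<xi>)) \<le> reduced_norm a * sqrt (nsq \<xi>)"
proof (cases "nsq \<xi> = 0")
  case True
  then have "\<xi> = (\<lambda>_. 0)" using nsq_zero_iff[OF x] by simp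
  then show ?thesis by (simp add: conv_def nsq_def)
next
  case False
  define n where "n = sqrt (nsq \<xi>)"
  have n0: "n > 0" using False nsq_nonneg[of \<xi>] by (simp add: n_def)
  define \<eta> where "\<eta> = (\<lambda>g. complex_of_real (1 / n) * \<xi> g)"
  have e: "\<eta> \<in> group_alg" unfolding \<eta>_def by (rule ga_smult[OF x])
  have "nsq \<eta> = (cmod (complex_of_real (1/n)))^2 * nsq \<xi>" unfolding \<eta>_def by (rule nsq_scale[OF x])
  also have "\<dots> = (1/n)^2 * nsq \<xi>" by (simp only: norm_of_real) (use n0 in simp)
  also have "\<dots> = 1" using n0 nsq_nonneg[of \<xi>] by (simp add: n_def power_divide)
  finally have ne: "nsq \<eta> = 1" .
  have "l2norm (conv a \<eta>) \<le> reduced_norm a"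
    by (rule rn_upper[OF a]) (simp_all add: l2_ga e ne)
  moreover have "l2norm (conv a \<eta>) = sqrt (nsq (conv a \<xi>)) / n"
  proof -
    have ce: "conv a \<eta> = (\<lambda>g. complex_of_real (1/n) * conv a \<xi> g)" unfolding \<eta>_def by (rule conv_smult_right)
    have "nsq (conv a \<eta>) = (cmod (complex_of_real (1/n)))^2 * nsq (conv a \<xi>)"
      by (simp only: ce nsq_scale[OF ga_conv[OF a x]])
    then show ?thesis using n0 ga_conv[OF a e]
      by (simp add: l2_ga real_sqrt_mult real_sqrt_divide norm_divide)
  qed
  ultimately have "sqrt (nsq (conv a \<xi>)) / n \<le> reduced_norm a" by simp
  then show ?thesis using n0 by (simp add: n_def divide_le_eq mult.commute)
qed


lemma spt_tr: "spt (tr k v) = (\<lambda>g. k + g) ` spt v"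
proof -
  have "g \<in> spt (tr k v) \<longleftrightarrow> g \<in> (\<lambda>g. k + g) ` spt v" for g
  proof
    assume "g \<in> spt (tr k v)"
    then have "- k + g \<in> spt v" by (simp add: spt_def tr_def)
    then show "g \<in> (\<lambda>g. k + g) ` spt v" by (rule rev_image_eqI) (simp add: add.assoc[symmetric])
  next
    assume "g \<in> (\<lambda>g. k + g) ` spt v"
    then show "g \<in> spt (tr k v)" by (auto simp: spt_def tr_def add.assoc[symmetric])
  qed
  then show ?thesis by blast
qed

context cz
begin

definition Q :: "complex \<Rightarrow> ('g \<Rightarrow> complex) \<Rightarrow> real" where
  "Q \<omega> x = Re (B \<omega> x x)"

lemma seq_self:
  assumes "x \<in> group_alg"
  shows "ip (conv x (uN \<omega> N)) (conv x (uN \<omega> N)) / of_nat N = complex_of_real (nsq (conv x (uN \<omega> N)) / real N)"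
  using assms by (simp add: ip_self ga_conv ga_uN)

lemma Q_lim:
  assumes w: "cmod \<omega> = 1" and x: "x \<in> group_alg"
  shows "(\<lambda>N. nsq (conv x (uN \<omega> N)) / real N) \<longlonglongrightarrow> Q \<omega> x"
proof -
  have "(\<lambda>N. Re (ip (conv x (uN \<omega> N)) (conv x (uN \<omega> N)) / of_nat N)) \<longlonglongrightarrow> Re (B \<omega> x x)"
    by (rule tendsto_Re[OF B_lim[OF w x x]])
  then show ?thesis by (simp only: seq_self[OF x] Re_complex_of_real Q_def)
qed

lemma B_self:
  assumes w: "cmod \<omega> = 1" and x: "x \<in> group_alg"
  shows "B \<omega> x x = complex_of_real (Q \<omega> x)" "Q \<omega> x \<ge> 0"
proof -
  have "(\<lambda>N. Im (ip (conv x (uN \<omega> N)) (conv x (uN \<omega> N)) / of_nat N)) \<longlonglongrightarrow> Im (B \<omega> x x)"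
    by (rule tendsto_Im[OF B_lim[OF w x x]])
  then have "(\<lambda>N. 0) \<longlonglongrightarrow> Im (B \<omega> x x)" by (simp only: seq_self[OF x] Im_complex_of_real)
  then have "Im (B \<omega> x x) = 0" by (simp add: LIMSEQ_const_iff)
  then show "B \<omega> x x = complex_of_real (Q \<omega> x)" by (simp add: complex_eq_iff Q_def)
  show "Q \<omega> x \<ge> 0"
    by (rule LIMSEQ_le_const[OF Q_lim[OF w x]]) (intro exI allI impI divide_nonneg_nonneg nsq_nonneg of_nat_0_le_iff)
qed

lemma B_CS:
  assumes w: "cmod \<omega> = 1" and x: "x \<in> group_alg" and y: "y \<in> group_alg"
  shows "cmod (B \<omega> x y) \<le> sqrt (Q \<omega> x) * sqrt (Q \<omega> y)"
proof (rule tendsto_le[OF trivial_limit_sequentially])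
  show "(\<lambda>N. sqrt (nsq (conv x (uN \<omega> N)) / real N) * sqrt (nsq (conv y (uN \<omega> N)) / real N))
      \<longlonglongrightarrow> sqrt (Q \<omega> x) * sqrt (Q \<omega> y)"
    by (intro tendsto_mult tendsto_real_sqrt Q_lim w x y)
  show "(\<lambda>N. cmod (ip (conv x (uN \<omega> N)) (conv y (uN \<omega> N)) / of_nat N)) \<longlonglongrightarrow> cmod (B \<omega> x y)"
    by (intro tendsto_norm B_lim w x y)
  show "\<forall>\<^sub>F N in sequentially. cmod (ip (conv x (uN \<omega> N)) (conv y (uN \<omega> N)) / of_nat N)
      \<le> sqrt (nsq (conv x (uN \<omega> N)) / real N) * sqrt (nsq (conv y (uN \<omega> N)) / real N)"
  proof (rule always_eventually, rule allI)
    fix N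
    have "cmod (ip (conv x (uN \<omega> N)) (conv y (uN \<omega> N))) \<le> sqrt (nsq (conv x (uN \<omega> N))) * sqrt (nsq (conv y (uN \<omega> N)))"
      by (intro ip_CS ga_conv x y ga_uN)
    then have "cmod (ip (conv x (uN \<omega> N)) (conv y (uN \<omega> N))) / real N \<le> sqrt (nsq (conv x (uN \<omega> N))) * sqrt (nsq (conv y (uN \<omega> N))) / real N"
      by (rule divide_right_mono) simp
    then show "cmod (ip (conv x (uN \<omega> N)) (conv y (uN \<omega> N)) / of_nat N)
      \<le> sqrt (nsq (conv x (uN \<omega> N)) / real N) * sqrt (nsq (conv y (uN \<omega> N)) / real N)"
      by (simp add: norm_divide real_sqrt_divide)
  qed
qed

lemma Q_tri:
  assumes w: "cmod \<omega> = 1" and x: "x \<in> group_alg" and y: "y \<in> group_alg"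
  shows "sqrt (Q \<omega> (\<lambda>g. x g + y g)) \<le> sqrt (Q \<omega> x) + sqrt (Q \<omega> y)"
proof (rule tendsto_le[OF trivial_limit_sequentially])
  show "(\<lambda>N. sqrt (nsq (conv x (uN \<omega> N)) / real N) + sqrt (nsq (conv y (uN \<omega> N)) / real N))
      \<longlonglongrightarrow> sqrt (Q \<omega> x) + sqrt (Q \<omega> y)"
    by (intro tendsto_add tendsto_real_sqrt Q_lim w x y)
  show "(\<lambda>N. sqrt (nsq (conv (\<lambda>g. x g + y g) (uN \<omega> N)) / real N)) \<longlonglongrightarrow> sqrt (Q \<omega> (\<lambda>g. x g + y g))"
    by (intro tendsto_real_sqrt Q_lim w ga_add x y)
  show "\<forall>\<^sub>F N in sequentially. sqrt (nsq (conv (\<lambda>g. x g + y g) (uN \<omega> N)) / real N)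
      \<le> sqrt (nsq (conv x (uN \<omega> N)) / real N) + sqrt (nsq (conv y (uN \<omega> N)) / real N)"
  proof (rule always_eventually, rule allI)
    fix N
    have "sqrt (nsq (conv (\<lambda>g. x g + y g) (uN \<omega> N))) \<le> sqrt (nsq (conv x (uN \<omega> N))) + sqrt (nsq (conv y (uN \<omega> N)))"
      unfolding conv_add_left[OF x y] by (intro nsq_triangle ga_conv x y ga_uN)
    then have "sqrt (nsq (conv (\<lambda>g. x g + y g) (uN \<omega> N))) / sqrt (real N) \<le> (sqrt (nsq (conv x (uN \<omega> N))) + sqrt (nsq (conv y (uN \<omega> N)))) / sqrt (real N)"
      by (rule divide_right_mono) simp
    then show "sqrt (nsq (conv (\<lambda>g. x g + y g) (uN \<omega> N)) / real N)
      \<le> sqrt (nsq (conv x (uN \<omega> N)) / real N) + sqrt (nsq (conv y (uN \<omega> N)) / real N)"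
      by (simp add: real_sqrt_divide add_divide_distrib)
  qed
qed

lemma B_add_left:
  assumes w: "cmod \<omega> = 1" and x: "x \<in> group_alg" and y: "y \<in> group_alg" and v: "v \<in> group_alg"
  shows "B \<omega> (\<lambda>g. x g + y g) v = B \<omega> x v + B \<omega> y v"
proof (rule LIMSEQ_unique[OF B_lim[OF w ga_add[OF x y] v]])
  have "ip (conv (\<lambda>g. x g + y g) (uN \<omega> N)) (conv v (uN \<omega> N)) / of_nat N =
     ip (conv x (uN \<omega> N)) (conv v (uN \<omega> N)) / of_nat N + ip (conv y (uN \<omega> N)) (conv v (uN \<omega> N)) / of_nat N" for N
    unfolding conv_add_left[OF x y] by (simp add: ip_add_left ga_conv x y ga_uN add_divide_distrib)
  then show "(\<lambda>N. ip (conv (\<lambda>g. x g + y g) (uN \<omega> N)) (conv v (uN \<omega> N)) / of_nat N) \<longlonglongrightarrow> B \<omega> x v + B \<omega> y v"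
    by (simp only:) (intro tendsto_add B_lim w x y v)
qed

lemma B_smult_left:
  assumes w: "cmod \<omega> = 1" and x: "x \<in> group_alg" and v: "v \<in> group_alg"
  shows "B \<omega> (\<lambda>g. c * x g) v = c * B \<omega> x v"
proof (rule LIMSEQ_unique[OF B_lim[OF w ga_smult[OF x] v]])
  have "ip (conv (\<lambda>g. c * x g) (uN \<omega> N)) (conv v (uN \<omega> N)) / of_nat N =
     c * (ip (conv x (uN \<omega> N)) (conv v (uN \<omega> N)) / of_nat N)" for N
    unfolding conv_smult_left[OF x] by (simp add: ip_smult_left ga_conv x ga_uN)
  then show "(\<lambda>N. ip (conv (\<lambda>g. c * x g) (uN \<omega> N)) (conv v (uN \<omega> N)) / of_nat N) \<longlonglongrightarrow> c * B \<omega> x v"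
    by (simp only:) (intro tendsto_mult tendsto_const B_lim w x v)
qed

lemma B_cnj:
  assumes w: "cmod \<omega> = 1" and x: "x \<in> group_alg" and y: "y \<in> group_alg"
  shows "B \<omega> x y = cnj (B \<omega> y x)"
proof (rule LIMSEQ_unique[OF B_lim[OF w x y]])
  have "ip (conv x (uN \<omega> N)) (conv y (uN \<omega> N)) / of_nat N = cnj (ip (conv y (uN \<omega> N)) (conv x (uN \<omega> N)) / of_nat N)" for N
    by (simp add: ip_cnj[of "conv x _"])
  then show "(\<lambda>N. ip (conv x (uN \<omega> N)) (conv y (uN \<omega> N)) / of_nat N) \<longlonglongrightarrow> cnj (B \<omega> y x)"
    by (simp only:) (intro tendsto_cnj B_lim w x y)
qed

lemma B_adj:
  assumes w: "cmod \<omega> = 1" and a: "a \<in> group_alg" and x: "x \<in> group_alg" and y: "y \<in> group_alg"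
  shows "B \<omega> (conv a x) y = B \<omega> x (conv (inv_star a) y)"
proof (rule LIMSEQ_unique[OF B_lim[OF w ga_conv[OF a x] y]])
  have "ip (conv (conv a x) (uN \<omega> N)) (conv y (uN \<omega> N)) = ip (conv x (uN \<omega> N)) (conv (conv (inv_star a) y) (uN \<omega> N))" for N
    by (simp add: conv_assoc a x ga_inv_star y ip_conv_adj ga_conv ga_uN)
  then show "(\<lambda>N. ip (conv (conv a x) (uN \<omega> N)) (conv y (uN \<omega> N)) / of_nat N) \<longlonglongrightarrow> B \<omega> x (conv (inv_star a) y)"
    by (simp only:) (intro B_lim w x ga_conv ga_inv_star a y)
qed

lemma Q_bound:
  assumes w: "cmod \<omega> = 1" and a: "a \<in> group_alg" and v: "v \<in> group_alg"
  shows "Q \<omega> (conv a v) \<le> (reduced_norm a)^2 * Q \<omega> v"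
proof (rule tendsto_le[OF trivial_limit_sequentially])
  show "(\<lambda>N. (reduced_norm a)^2 * (nsq (conv v (uN \<omega> N)) / real N)) \<longlonglongrightarrow> (reduced_norm a)^2 * Q \<omega> v"
    by (intro tendsto_mult tendsto_const Q_lim w v)
  show "(\<lambda>N. nsq (conv (conv a v) (uN \<omega> N)) / real N) \<longlonglongrightarrow> Q \<omega> (conv a v)"
    by (intro Q_lim w ga_conv a v)
  show "\<forall>\<^sub>F N in sequentially. nsq (conv (conv a v) (uN \<omega> N)) / real N \<le> (reduced_norm a)^2 * (nsq (conv v (uN \<omega> N)) / real N)"
  proof (rule always_eventually, rule allI)
    fix N
    let ?\<xi> = "conv v (uN \<omega> N)"
    have xi: "?\<xi> \<in> group_alg" by (intro ga_conv v ga_uN)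
    have "sqrt (nsq (conv a ?\<xi>)) \<le> reduced_norm a * sqrt (nsq ?\<xi>)" by (rule rn_bound[OF a xi])
    then have "(sqrt (nsq (conv a ?\<xi>)))^2 \<le> (reduced_norm a * sqrt (nsq ?\<xi>))^2"
      by (rule power_mono) (simp add: nsq_nonneg)
    then have "nsq (conv a ?\<xi>) \<le> (reduced_norm a)^2 * nsq ?\<xi>"
      using nsq_nonneg[of "conv a ?\<xi>"] nsq_nonneg[of ?\<xi>] by (simp add: power_mult_distrib)
    then have "nsq (conv a ?\<xi>) / real N \<le> (reduced_norm a)^2 * nsq ?\<xi> / real N"
      by (rule divide_right_mono) simp
    then show "nsq (conv (conv a v) (uN \<omega> N)) / real N \<le> (reduced_norm a)^2 * (nsq ?\<xi> / real N)"
      by (simp add: conv_assoc a v)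
  qed
qed

end

lemma inv_star_inv_star[simp]: "inv_star (inv_star a) = a"
  by (simp add: inv_star_def)

lemma conv_zero_right: "conv a (\<lambda>_. 0) = (\<lambda>_. 0)"
  by (simp add: conv_def)

context cz
begin

lemma B_zero_left: "B \<omega> (\<lambda>_. 0) y = 0"
  by (simp add: B_def spt_def)

lemma Q_zero: "Q \<omega> (\<lambda>_. 0) = 0"
  by (simp add: Q_def B_zero_left)

lemma B_shift:
  assumes w: "cmod \<omega> = 1" and v: "v \<in> group_alg" and y: "y \<in> group_alg"
  shows "B \<omega> (tr z v) y = \<omega> * B \<omega> v y"
proof -
  have w0: "\<omega> \<noteq> 0" using w by auto
  have key: "phi \<omega> (- h + (z + g)) = \<omega> * phi \<omega> (- h + g)" for h g
  proof -
    have "- h + (z + g) = zm 1 + (- h + g)"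
      by (simp add: add.assoc[symmetric] zc[of "- h", symmetric])
    then show ?thesis using phi_shift[OF w0, of 1] by simp
  qed
  have "B \<omega> (tr z v) y = (\<Sum>g\<in>(\<lambda>g. z + g) ` spt v. \<Sum>h\<in>spt y. tr z v g * cnj (y h) * phi \<omega> (- h + g))"
    by (simp add: B_def spt_tr)
  also have "\<dots> = (\<Sum>g\<in>spt v. \<Sum>h\<in>spt y. v g * cnj (y h) * phi \<omega> (- h + (z + g)))"
    by (subst sum.reindex) (auto simp: inj_on_def tr_def add.assoc[symmetric])
  also have "\<dots> = \<omega> * B \<omega> v y"
    by (simp add: key B_def sum_distrib_left mult.commute mult.left_commute)
  finally show ?thesis .
qed

lemma cw1: "cmod \<omega> = 1 \<Longrightarrow> \<omega> * cnj \<omega> = 1"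
  by (simp add: complex_norm_square[symmetric])

lemma Q_shift:
  assumes w: "cmod \<omega> = 1" and v: "v \<in> group_alg"
  shows "Q \<omega> (\<lambda>g. v g + tr z v g) = (2 + 2 * Re \<omega>) * Q \<omega> v"
proof -
  let ?t = "tr z v"
  have t: "?t \<in> group_alg" by (rule ga_tr[OF v])
  define b where "b = B \<omega> v v"
  have b: "b = complex_of_real (Q \<omega> v)" by (simp add: b_def B_self[OF w v])
  have tv: "B \<omega> ?t v = \<omega> * b" by (simp add: b_def B_shift[OF w v v])
  have vt: "B \<omega> v ?t = cnj \<omega> * b"
    using B_cnj[OF w v t] tv b by simp
  have tt: "B \<omega> ?t ?t = b"
  proof -
    have "B \<omega> ?t ?t = \<omega> * B \<omega> v ?t" by (rule B_shift[OF w v t])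
    then show ?thesis using vt cw1[OF w] by (simp add: mult.assoc[symmetric])
  qed
  have "B \<omega> (\<lambda>g. v g + ?t g) (\<lambda>g. v g + ?t g) = B \<omega> v (\<lambda>g. v g + ?t g) + B \<omega> ?t (\<lambda>g. v g + ?t g)"
    by (rule B_add_left[OF w v t ga_add[OF v t]])
  also have "B \<omega> v (\<lambda>g. v g + ?t g) = cnj (B \<omega> v v + B \<omega> ?t v)"
    by (simp add: B_cnj[OF w v ga_add[OF v t]] B_add_left[OF w v t v])
  also have "B \<omega> ?t (\<lambda>g. v g + ?t g) = cnj (B \<omega> v ?t + B \<omega> ?t ?t)"
    by (simp add: B_cnj[OF w t ga_add[OF v t]] B_add_left[OF w v t t])
  finally have "B \<omega> (\<lambda>g. v g + ?t g) (\<lambda>g. v g + ?t g) = cnj (b + \<omega> * b) + cnj (cnj \<omega> * b + b)"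
    by (simp add: tv vt tt b_def)
  then show ?thesis by (simp add: Q_def b algebra_simps)
qed

lemma Q_scale:
  assumes w: "cmod \<omega> = 1" and x: "x \<in> group_alg"
  shows "Q \<omega> (\<lambda>g. c * x g) = (cmod c)^2 * Q \<omega> x"
proof -
  have cx: "(\<lambda>g. c * x g) \<in> group_alg" by (rule ga_smult[OF x])
  have "B \<omega> (\<lambda>g. c * x g) (\<lambda>g. c * x g) = c * B \<omega> x (\<lambda>g. c * x g)" by (rule B_smult_left[OF w x cx])
  also have "B \<omega> x (\<lambda>g. c * x g) = cnj (c * B \<omega> x x)"
    by (simp add: B_cnj[OF w x cx] B_smult_left[OF w x x])
  finally have "B \<omega> (\<lambda>g. c * x g) (\<lambda>g. c * x g) = (c * cnj c) * B \<omega> x x"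
    by (simp add: mult.assoc B_self(1)[OF w x])
  then have e: "B \<omega> (\<lambda>g. c * x g) (\<lambda>g. c * x g) = (c * cnj c) * complex_of_real (Q \<omega> x)"
    by (simp only: B_self(1)[OF w x])
  have "Q \<omega> (\<lambda>g. c * x g) = Re (B \<omega> (\<lambda>g. c * x g) (\<lambda>g. c * x g))" by (rule Q_def)
  also have "\<dots> = (cmod c)^2 * Q \<omega> x" by (simp only: e complex_norm_square[symmetric]) simp
  finally show ?thesis .
qed

definition Om :: "complex set" where "Om = {\<omega>. cmod \<omega> = 1 \<and> Re \<omega> \<le> 0}"

definition SS :: "('g \<Rightarrow> complex) \<Rightarrow> real set" where
  "SS a = {sqrt (Q \<omega> (conv a v)) | \<omega> v. \<omega> \<in> Om \<and> v \<in> group_alg \<and> Q \<omega> v \<le> 1}"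

definition NN :: "('g \<Rightarrow> complex) \<Rightarrow> real" where "NN a = Sup (SS a)"

lemma Om_w: "\<omega> \<in> Om \<Longrightarrow> cmod \<omega> = 1" by (simp add: Om_def)

lemma SS_zero: "0 \<in> SS a"
proof -
  have 1: "(-1::complex) \<in> Om" by (simp add: Om_def)
  have 2: "(0::real) = sqrt (Q (-1) (conv a (\<lambda>_. 0)))" by (simp add: conv_zero_right Q_zero)
  have 3: "Q (-1) (\<lambda>_. 0) \<le> 1" by (simp add: Q_zero)
  show ?thesis unfolding SS_def using 1 2 3 ga_zero by blast
qed

lemma SS_le_rn:
  assumes a: "a \<in> group_alg" and r: "r \<in> SS a"
  shows "r \<le> reduced_norm a"
proof -
  obtain \<omega> v where o: "\<omega> \<in> Om" and v: "v \<in> group_alg" and q: "Q \<omega> v \<le> 1" and r: "r = sqrt (Q \<omega> (conv a v))"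
    using r by (auto simp: SS_def)
  have w: "cmod \<omega> = 1" using o by (rule Om_w)
  have "Q \<omega> (conv a v) \<le> (reduced_norm a)^2 * Q \<omega> v" by (rule Q_bound[OF w a v])
  also have "\<dots> \<le> (reduced_norm a)^2 * 1" by (rule mult_left_mono[OF q]) simp
  finally have "sqrt (Q \<omega> (conv a v)) \<le> sqrt ((reduced_norm a)^2)" by (simp only: mult_1_right real_sqrt_le_mono)
  then have "sqrt (Q \<omega> (conv a v)) \<le> \<bar>reduced_norm a\<bar>" by (simp only: real_sqrt_abs)
  then show ?thesis using r rn_nonneg[OF a] by simp
qed

lemma SS_bdd: "a \<in> group_alg \<Longrightarrow> bdd_above (SS a)"
  using SS_le_rn by (meson bdd_aboveI)

lemma NN_upper: "a \<in> group_alg \<Longrightarrow> r \<in> SS a \<Longrightarrow> r \<le> NN a"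
  unfolding NN_def by (rule cSup_upper) (auto intro: SS_bdd)

lemma NN_least: "(\<And>r. r \<in> SS a \<Longrightarrow> r \<le> M) \<Longrightarrow> NN a \<le> M"
  unfolding NN_def by (rule cSup_least) (use SS_zero in auto)

lemma NN_upper': "a \<in> group_alg \<Longrightarrow> \<omega> \<in> Om \<Longrightarrow> v \<in> group_alg \<Longrightarrow> Q \<omega> v \<le> 1 \<Longrightarrow> sqrt (Q \<omega> (conv a v)) \<le> NN a"
  by (rule NN_upper) (auto simp: SS_def)

lemma NN_least': "(\<And>\<omega> v. \<omega> \<in> Om \<Longrightarrow> v \<in> group_alg \<Longrightarrow> Q \<omega> v \<le> 1 \<Longrightarrow> sqrt (Q \<omega> (conv a v)) \<le> M) \<Longrightarrow> NN a \<le> M"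
  by (rule NN_least) (auto simp: SS_def)

lemma NN_nonneg: "a \<in> group_alg \<Longrightarrow> 0 \<le> NN a"
  using NN_upper[OF _ SS_zero] .

lemma NN_le_rn: "a \<in> group_alg \<Longrightarrow> NN a \<le> reduced_norm a"
  by (rule NN_least) (rule SS_le_rn)

lemma NN_bound:
  assumes a: "a \<in> group_alg" and o: "\<omega> \<in> Om" and x: "x \<in> group_alg"
  shows "sqrt (Q \<omega> (conv a x)) \<le> NN a * sqrt (Q \<omega> x)"
proof -
  have w: "cmod \<omega> = 1" using o by (rule Om_w)
  show ?thesis
  proof (cases "Q \<omega> x = 0")
    case True
    have "Q \<omega> (conv a x) \<le> (reduced_norm a)^2 * Q \<omega> x" by (rule Q_bound[OF w a x])
    then have "Q \<omega> (conv a x) = 0" using True B_self(2)[OF w ga_conv[OF a x]] by simp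
    then show ?thesis using NN_nonneg[OF a] True by simp
  next
    case False
    define t where "t = sqrt (Q \<omega> x)"
    have t0: "t > 0" using False B_self(2)[OF w x] by (simp add: t_def)
    define v where "v = (\<lambda>g. complex_of_real (1/t) * x g)"
    have v: "v \<in> group_alg" unfolding v_def by (rule ga_smult[OF x])
    have "Q \<omega> v = (cmod (complex_of_real (1/t)))^2 * Q \<omega> x" unfolding v_def by (rule Q_scale[OF w x])
    also have "\<dots> = (1/t)^2 * Q \<omega> x" by (simp only: norm_of_real) (use t0 in simp)
    also have "\<dots> = 1" using t0 B_self(2)[OF w x] by (simp add: t_def power_divide)
    finally have qv: "Q \<omega> v = 1" .
    have ce: "conv a v = (\<lambda>g. complex_of_real (1/t) * conv a x g)" unfolding v_def by (rule conv_smult_right)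
    have "Q \<omega> (conv a v) = (cmod (complex_of_real (1/t)))^2 * Q \<omega> (conv a x)"
      by (simp only: ce Q_scale[OF w ga_conv[OF a x]])
    then have "sqrt (Q \<omega> (conv a v)) = sqrt (Q \<omega> (conv a x)) / t"
      using t0 by (simp add: real_sqrt_mult real_sqrt_divide norm_divide)
    moreover have "sqrt (Q \<omega> (conv a v)) \<le> NN a" by (rule NN_upper'[OF a o v]) (simp add: qv)
    ultimately have "sqrt (Q \<omega> (conv a x)) / t \<le> NN a" by simp
    then show ?thesis using t0 by (simp add: t_def divide_le_eq mult.commute)
  qed
qed

end

context cz
begin

lemma Om_infinite: "infinite Om"
proof -
  define f where "f = (\<lambda>t::real. Complex (- sqrt (1 - t^2)) t)"
  have inj: "inj_on f {0..1}" by (auto simp: inj_on_def f_def)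
  have sub: "f ` {0..1} \<subseteq> Om"
  proof
    fix w assume "w \<in> f ` {0..1}"
    then obtain t where t: "t \<in> {0..1}" "w = f t" by blast
    from t(1) have t01: "0 \<le> t" "t \<le> 1" by auto
    have "t^2 \<le> 1" by (rule power_le_one[OF t01])
    then have s: "(sqrt (1 - t^2))^2 = 1 - t^2" by (intro real_sqrt_pow2) linarith
    have "cmod w = 1" by (simp add: t(2) f_def cmod_def s)
    moreover have "Re w \<le> 0"
    proof -
      have "0 \<le> sqrt (1 - t^2)" by (rule real_sqrt_ge_zero) (use \<open>t^2 \<le> 1\<close> in linarith)
      moreover have "Re w = - sqrt (1 - t^2)" by (simp add: t(2) f_def)
      ultimately show ?thesis by simp
    qed
    ultimately show "w \<in> Om" by (simp add: Om_def)
  qed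
  have "infinite (f ` {0..1})" using inj by (simp add: finite_image_iff)
  then show ?thesis using sub finite_subset by blast
qed

lemma faithful:
  assumes a: "a \<in> group_alg" and a0: "a \<noteq> (\<lambda>_. 0)"
  shows "\<exists>\<omega>\<in>Om. Q \<omega> a > 0"
proof -
  define S where "S = spt a"
  have fS: "finite S" using a by (simp add: S_def ga_iff)
  have neS: "S \<noteq> {}" using a0 by (auto simp: S_def spt_def fun_eq_iff)
  define J where "J = (\<lambda>g h. inv zm (- h + g))"
  define M where "M = nat (Max ((\<lambda>(g,h). \<bar>J g h\<bar>) ` (S \<times> S)))"
  have Mb: "\<bar>J g h\<bar> \<le> int M" if "g \<in> S" "h \<in> S" for g h
  proof -
    have "\<bar>J g h\<bar> \<le> Max ((\<lambda>(g,h). \<bar>J g h\<bar>) ` (S \<times> S))"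
      by (rule Max_ge) (use fS that in auto)
    then show ?thesis using abs_ge_zero[of "J g h"] by (simp add: M_def) linarith
  qed
  define cf where "cf = (\<lambda>g h. if - h + g \<in> range zm then a g * cnj (a h) else 0)"
  define e where "e = (\<lambda>g h. nat (int M + J g h))"
  define P where "P = (\<Sum>g\<in>S. \<Sum>h\<in>S. monom (cf g h) (e g h))"
  have polyP: "poly P \<omega> = \<omega> ^ M * B \<omega> a a" if w0: "\<omega> \<noteq> 0" for \<omega>
  proof -
    have trm: "cf g h * \<omega> ^ e g h = \<omega> ^ M * (a g * cnj (a h) * phi \<omega> (- h + g))" if "g \<in> S" "h \<in> S" for g h
    proof (cases "- h + g \<in> range zm")
      case True
      then obtain j where j: "- h + g = zm j" by blast
      have Jj: "J g h = j" by (simp add: J_def j inv_f_f[OF inj_zm])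
      have nn: "0 \<le> int M + j" using Mb[OF that] Jj by simp
      have "\<omega> ^ e g h = \<omega> powi (int M + j)" using nn by (simp add: e_def Jj power_int_def)
      also have "\<dots> = \<omega> ^ M * \<omega> powi j" using w0 by (simp add: power_int_add)
      finally show ?thesis using True by (simp add: cf_def j phi_zm)
    next
      case False
      then show ?thesis by (simp add: cf_def phi_notin)
    qed
    have "poly P \<omega> = (\<Sum>g\<in>S. \<Sum>h\<in>S. cf g h * \<omega> ^ e g h)"
      by (simp add: P_def poly_sum poly_monom)
    also have "\<dots> = (\<Sum>g\<in>S. \<Sum>h\<in>S. \<omega> ^ M * (a g * cnj (a h) * phi \<omega> (- h + g)))"
      by (intro sum.cong refl trm)
    also have "\<dots> = \<omega> ^ M * B \<omega> a a" by (simp add: B_def S_def sum_distrib_left)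
    finally show ?thesis .
  qed
  have coefP: "coeff P M = (\<Sum>g\<in>S. a g * cnj (a g))"
  proof -
    have trm: "(if e g h = M then cf g h else 0) = (if g = h then a g * cnj (a h) else 0)" if "g \<in> S" "h \<in> S" for g h
    proof (cases "- h + g \<in> range zm")
      case True
      then obtain j where j: "- h + g = zm j" by blast
      have Jj: "J g h = j" by (simp add: J_def j inv_f_f[OF inj_zm])
      have nn: "0 \<le> int M + j" using Mb[OF that] Jj by simp
      have "e g h = M \<longleftrightarrow> j = 0" using nn by (simp add: e_def Jj) linarith
      also have "\<dots> \<longleftrightarrow> zm j = 0" by (rule zm_eq0[symmetric])
      also have "\<dots> \<longleftrightarrow> - h + g = 0" using j by simp
      also have "\<dots> \<longleftrightarrow> g = h" by (auto simp: neg_add0)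
      moreover have "0 \<in> range zm" by (metis rangeI zm_0)
      ultimately show ?thesis using True by (simp add: cf_def)
    next
      case False
      have "g \<noteq> h"
      proof
        assume "g = h" then have "- h + g = zm 0" by simp
        then show False using False by blast
      qed
      then show ?thesis using False by (simp add: cf_def)
    qed
    have "coeff P M = (\<Sum>g\<in>S. \<Sum>h\<in>S. if e g h = M then cf g h else 0)"
      by (simp add: P_def coeff_sum)
    also have "\<dots> = (\<Sum>g\<in>S. \<Sum>h\<in>S. if g = h then a g * cnj (a h) else 0)"
      by (intro sum.cong refl trm)
    also have "\<dots> = (\<Sum>g\<in>S. a g * cnj (a g))"
      using fS by (simp add: sum.delta)
    finally show ?thesis .
  qed
  have "(\<Sum>g\<in>S. a g * cnj (a g)) = (\<Sum>g\<in>S. complex_of_real ((cmod (a g))^2))"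
    by (simp only: complex_norm_square)
  also have "\<dots> = complex_of_real (\<Sum>g\<in>S. (cmod (a g))^2)" by (rule of_real_sum[symmetric])
  finally have eq: "(\<Sum>g\<in>S. a g * cnj (a g)) = complex_of_real (\<Sum>g\<in>S. (cmod (a g))^2)" .
  have pos: "(\<Sum>g\<in>S. (cmod (a g))^2) > 0"
    using fS neS by (intro sum_pos) (auto simp: S_def spt_def)
  have c1: "coeff P M = complex_of_real (\<Sum>g\<in>S. (cmod (a g))^2)" by (simp only: coefP eq)
  have "coeff P M \<noteq> 0" unfolding c1 of_real_eq_0_iff using pos by linarith
  then have "P \<noteq> 0" by auto
  then have fin: "finite {x. poly P x = 0}" by (rule poly_roots_finite)
  have "\<not> Om \<subseteq> {x. poly P x = 0}" using Om_infinite fin finite_subset by blast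
  then obtain \<omega> where o: "\<omega> \<in> Om" and nz: "poly P \<omega> \<noteq> 0" by blast
  have w: "cmod \<omega> = 1" using o by (rule Om_w)
  then have w0: "\<omega> \<noteq> 0" by auto
  have "B \<omega> a a \<noteq> 0" using nz polyP[OF w0] by auto
  then have "Q \<omega> a \<noteq> 0" using B_self(1)[OF w a] by simp
  then have "Q \<omega> a > 0" using B_self(2)[OF w a] by simp
  then show ?thesis using o by blast
qed

end

context cz
begin

lemma Q_dl0: "Q \<omega> (dl 0 1) = 1"
proof -
  have sp: "spt (dl 0 (1::complex)) = {0}" by (auto simp: spt_def dl_def)
  have "B \<omega> (dl 0 1) (dl 0 1) = (\<Sum>g\<in>{0}. \<Sum>h\<in>{0}. dl 0 1 g * cnj (dl 0 1 h) * phi \<omega> (- h + g))"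
    by (simp only: B_def sp)
  then have "B \<omega> (dl 0 1) (dl 0 1) = phi \<omega> 0" by (simp add: dl_def)
  also have "\<dots> = 1" using phi_zm[of \<omega> 0] by simp
  finally show ?thesis by (simp add: Q_def)
qed

lemma NN_zero: "NN (\<lambda>_. 0) = 0"
proof -
  have "NN (\<lambda>_. 0) \<le> 0" by (rule NN_least') (simp add: conv_zero_left Q_zero)
  then show ?thesis using NN_nonneg[OF ga_zero] by simp
qed

lemma NN_eq0:
  assumes a: "a \<in> group_alg"
  shows "NN a = 0 \<longleftrightarrow> a = (\<lambda>_. 0)"
proof
  assume n: "NN a = 0"
  show "a = (\<lambda>_. 0)"
  proof (rule ccontr)
    assume "a \<noteq> (\<lambda>_. 0)"
    then obtain \<omega> where o: "\<omega> \<in> Om" and q: "Q \<omega> a > 0" using faithful[OF a] by blast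
    have "sqrt (Q \<omega> (conv a (dl 0 1))) \<le> NN a" by (rule NN_upper'[OF a o ga_dl]) (simp add: Q_dl0)
    then have "sqrt (Q \<omega> a) \<le> 0" using n by (simp add: conv_dl0_right[OF a])
    then show False using q by simp
  qed
qed (simp add: NN_zero)

lemma NN_tri:
  assumes a: "a \<in> group_alg" and b: "b \<in> group_alg"
  shows "NN (\<lambda>g. a g + b g) \<le> NN a + NN b"
proof (rule NN_least')
  fix \<omega> v assume o: "\<omega> \<in> Om" and v: "v \<in> group_alg" and q: "Q \<omega> v \<le> 1"
  have w: "cmod \<omega> = 1" using o by (rule Om_w)
  have "sqrt (Q \<omega> (conv (\<lambda>g. a g + b g) v)) \<le> sqrt (Q \<omega> (conv a v)) + sqrt (Q \<omega> (conv b v))"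
    unfolding conv_add_left[OF a b] by (rule Q_tri[OF w ga_conv[OF a v] ga_conv[OF b v]])
  also have "\<dots> \<le> NN a + NN b"
    by (intro add_mono NN_upper'[OF a o v q] NN_upper'[OF b o v q])
  finally show "sqrt (Q \<omega> (conv (\<lambda>g. a g + b g) v)) \<le> NN a + NN b" .
qed

lemma NN_hom_le:
  assumes a: "a \<in> group_alg"
  shows "NN (\<lambda>g. c * a g) \<le> cmod c * NN a"
proof (rule NN_least')
  fix \<omega> v assume o: "\<omega> \<in> Om" and v: "v \<in> group_alg" and q: "Q \<omega> v \<le> 1"
  have w: "cmod \<omega> = 1" using o by (rule Om_w)
  have "Q \<omega> (conv (\<lambda>g. c * a g) v) = (cmod c)^2 * Q \<omega> (conv a v)"
    by (simp only: conv_smult_left[OF a] Q_scale[OF w ga_conv[OF a v]])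
  then have "sqrt (Q \<omega> (conv (\<lambda>g. c * a g) v)) = cmod c * sqrt (Q \<omega> (conv a v))"
    by (simp add: real_sqrt_mult)
  also have "\<dots> \<le> cmod c * NN a" by (intro mult_left_mono NN_upper'[OF a o v q] norm_ge_zero)
  finally show "sqrt (Q \<omega> (conv (\<lambda>g. c * a g) v)) \<le> cmod c * NN a" .
qed

lemma NN_hom:
  assumes a: "a \<in> group_alg"
  shows "NN (\<lambda>g. c * a g) = cmod c * NN a"
proof (cases "c = 0")
  case True
  then show ?thesis by (simp add: NN_zero)
next
  case False
  have ca: "(\<lambda>g. c * a g) \<in> group_alg" by (rule ga_smult[OF a])
  have "(\<lambda>g. inverse c * (c * a g)) = a" using False by (simp add: mult.assoc[symmetric])
  then have "NN a = NN (\<lambda>g. inverse c * (c * a g))" by simp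
  also have "\<dots> \<le> cmod (inverse c) * NN (\<lambda>g. c * a g)" by (rule NN_hom_le[OF ca])
  finally have "cmod c * NN a \<le> cmod c * (cmod (inverse c) * NN (\<lambda>g. c * a g))"
    by (rule mult_left_mono) simp
  also have "\<dots> = NN (\<lambda>g. c * a g)" using False by (simp add: norm_inverse)
  finally show ?thesis using NN_hom_le[OF a, of c] by simp
qed

lemma NN_submult:
  assumes a: "a \<in> group_alg" and b: "b \<in> group_alg"
  shows "NN (conv a b) \<le> NN a * NN b"
proof (rule NN_least')
  fix \<omega> v assume o: "\<omega> \<in> Om" and v: "v \<in> group_alg" and q: "Q \<omega> v \<le> 1"
  have "sqrt (Q \<omega> (conv (conv a b) v)) = sqrt (Q \<omega> (conv a (conv b v)))" by (simp add: conv_assoc a b)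
  also have "\<dots> \<le> NN a * sqrt (Q \<omega> (conv b v))" by (rule NN_bound[OF a o ga_conv[OF b v]])
  also have "\<dots> \<le> NN a * NN b" by (intro mult_left_mono NN_upper'[OF b o v q] NN_nonneg a)
  finally show "sqrt (Q \<omega> (conv (conv a b) v)) \<le> NN a * NN b" .
qed

lemma NN_sq_le:
  assumes a: "a \<in> group_alg"
  shows "(NN a)^2 \<le> NN (conv (inv_star a) a)"
proof -
  have as: "inv_star a \<in> group_alg" by (rule ga_inv_star[OF a])
  have aa: "conv (inv_star a) a \<in> group_alg" by (rule ga_conv[OF as a])
  have "NN a \<le> sqrt (NN (conv (inv_star a) a))"
  proof (rule NN_least')
    fix \<omega> v assume o: "\<omega> \<in> Om" and v: "v \<in> group_alg" and q: "Q \<omega> v \<le> 1"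
    have w: "cmod \<omega> = 1" using o by (rule Om_w)
    let ?w = "conv (conv (inv_star a) a) v"
    have wg: "?w \<in> group_alg" by (rule ga_conv[OF aa v])
    have "Q \<omega> (conv a v) = Re (B \<omega> (conv a v) (conv a v))" by (rule Q_def)
    also have "\<dots> = Re (B \<omega> v ?w)"
      by (simp add: B_adj[OF w a v ga_conv[OF a v]] conv_assoc as a)
    also have "\<dots> \<le> cmod (B \<omega> v ?w)" by (rule complex_Re_le_cmod)
    also have "\<dots> \<le> sqrt (Q \<omega> v) * sqrt (Q \<omega> ?w)" by (rule B_CS[OF w v wg])
    also have "\<dots> \<le> 1 * sqrt (Q \<omega> ?w)"
      by (rule mult_right_mono) (use q B_self(2)[OF w wg] in simp_all)
    also have "\<dots> \<le> NN (conv (inv_star a) a)" using NN_upper'[OF aa o v q] by simp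
    finally show "sqrt (Q \<omega> (conv a v)) \<le> sqrt (NN (conv (inv_star a) a))"
      by (rule real_sqrt_le_mono)
  qed
  then have "(NN a)^2 \<le> (sqrt (NN (conv (inv_star a) a)))^2"
    by (rule power_mono) (rule NN_nonneg[OF a])
  also have "\<dots> = NN (conv (inv_star a) a)" using NN_nonneg[OF aa] by simp
  finally show ?thesis .
qed

lemma NN_le_star:
  assumes a: "a \<in> group_alg"
  shows "NN a \<le> NN (inv_star a)"
proof (cases "NN a = 0")
  case True then show ?thesis using NN_nonneg[OF ga_inv_star[OF a]] by simp
next
  case False
  then have p: "NN a > 0" using NN_nonneg[OF a] by simp
  have "NN a * NN a \<le> NN (inv_star a) * NN a"
    using NN_sq_le[OF a] NN_submult[OF ga_inv_star[OF a] a] by (simp add: power2_eq_square)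
  then show ?thesis using p by simp
qed

lemma NN_cstar:
  assumes a: "a \<in> group_alg"
  shows "NN (conv (inv_star a) a) = (NN a)^2"
proof -
  have "NN (inv_star a) \<le> NN a" using NN_le_star[OF ga_inv_star[OF a]] by simp
  then have e: "NN (inv_star a) = NN a" using NN_le_star[OF a] by simp
  have "NN (conv (inv_star a) a) \<le> NN (inv_star a) * NN a" by (rule NN_submult[OF ga_inv_star[OF a] a])
  then have "NN (conv (inv_star a) a) \<le> (NN a)^2" by (simp add: e power2_eq_square)
  then show ?thesis using NN_sq_le[OF a] by simp
qed

definition a0 :: "'g \<Rightarrow> complex" where "a0 = (\<lambda>g. dl 0 1 g + dl z 1 g)"

lemma ga_a0: "a0 \<in> group_alg" unfolding a0_def by (intro ga_add ga_dl)

lemma conv_a0: "conv a0 v = (\<lambda>g. v g + tr z v g)"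
  unfolding a0_def by (simp add: conv_add_left ga_dl conv_dl_left)

lemma NN_a0: "NN a0 \<le> sqrt 2"
proof (rule NN_least')
  fix \<omega> v assume o: "\<omega> \<in> Om" and v: "v \<in> group_alg" and q: "Q \<omega> v \<le> 1"
  have w: "cmod \<omega> = 1" using o by (rule Om_w)
  have r0: "Re \<omega> \<le> 0" using o by (simp add: Om_def)
  have r1: "Re \<omega> \<ge> -1" using abs_Re_le_cmod[of \<omega>] w by simp
  have q0: "Q \<omega> v \<ge> 0" by (rule B_self(2)[OF w v])
  have "Q \<omega> (conv a0 v) = (2 + 2 * Re \<omega>) * Q \<omega> v" by (simp add: conv_a0 Q_shift[OF w v])
  also have "\<dots> \<le> (2 + 2 * Re \<omega>) * 1" by (rule mult_left_mono[OF q]) (use r1 in simp)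
  also have "\<dots> \<le> 2" using r0 by simp
  finally show "sqrt (Q \<omega> (conv a0 v)) \<le> sqrt 2" by (rule real_sqrt_le_mono)
qed

lemma z_facts: "z \<noteq> 0" "z + z \<noteq> 0" "z + z \<noteq> z"
proof -
  show z0: "z \<noteq> 0" using zm_eq0[of 1] by simp
  have "z + z = zm 2" using zm_add[of 1 1] by simp
  then show "z + z \<noteq> 0" using zm_eq0[of 2] by simp
  show "z + z \<noteq> z"
  proof
    assume "z + z = z" then have "z + z = z + 0" by simp
    then show False using z0 by (simp only: add_left_cancel)
  qed
qed

lemma rn_a0: "sqrt 2 < reduced_norm a0"
proof -
  note zf = z_facts
  have a0_0: "a0 0 = 1" using zf by (simp add: a0_def dl_def)
  have a0_z: "a0 z = 1" using zf by (simp add: a0_def dl_def)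
  have a0_zz: "a0 (z + z) = 0" using zf by (simp add: a0_def dl_def)
  have na0: "nsq a0 = 2"
  proof -
    have "nsq a0 = (\<Sum>g\<in>{0, z}. (cmod (a0 g))^2)"
      by (rule nsq_sum) (auto simp: spt_def a0_def dl_def)
    also have "\<dots> = 2" using zf by (simp add: a0_0 a0_z)
    finally show ?thesis .
  qed
  define c where "c = conv a0 a0"
  have cg: "c \<in> group_alg" unfolding c_def by (rule ga_conv[OF ga_a0 ga_a0])
  have cz1: "c z = 2" using a0_z a0_0 by (simp add: c_def conv_a0 tr_def)
  have cz2: "c (z + z) = 1" using a0_z a0_zz by (simp add: c_def conv_a0 tr_def add.assoc[symmetric])
  have nc: "nsq c \<ge> 5"
  proof -
    define A where "A = spt c \<union> {z, z + z}"
    have fA: "finite A" using cg by (simp add: A_def ga_iff)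
    have "nsq c = (\<Sum>g\<in>A. (cmod (c g))^2)" by (rule nsq_sum[OF fA]) (auto simp: A_def)
    also have "\<dots> \<ge> (\<Sum>g\<in>{z, z + z}. (cmod (c g))^2)"
      by (rule sum_mono2[OF fA]) (auto simp: A_def)
    moreover have "(\<Sum>g\<in>{z, z + z}. (cmod (c g))^2) = 5"
      using zf by (simp add: cz1 cz2)
    ultimately show ?thesis by simp
  qed
  have "sqrt (nsq c) \<le> reduced_norm a0 * sqrt (nsq a0)"
    unfolding c_def by (rule rn_bound[OF ga_a0 ga_a0])
  then have h1: "sqrt (nsq c) \<le> reduced_norm a0 * sqrt 2" by (simp add: na0)
  have h2: "sqrt 5 \<le> sqrt (nsq c)" by (rule real_sqrt_le_mono[OF nc])
  from h1 h2 have "sqrt 5 \<le> reduced_norm a0 * sqrt 2" by linarith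
  moreover have "sqrt 2 * sqrt 2 < sqrt 5" by (simp add: real_less_rsqrt)
  ultimately have "sqrt 2 * sqrt 2 < reduced_norm a0 * sqrt 2" by linarith
  then show ?thesis by (rule mult_right_less_imp_less) simp
qed

end

theorem proposition3:
  fixes z :: "'g::{group_add, countable}"
  assumes "central z" and "infinite_order z"
  shows "\<not> cstar_r_unique TYPE('g)"
proof -
  interpret cz z using assms by unfold_locales
  have c1: "\<forall>a\<in>group_alg. 0 \<le> NN a \<and> (NN a = 0 \<longleftrightarrow> a = (\<lambda>_. 0))"
    using NN_nonneg NN_eq0 by blast
  have c2: "\<forall>a\<in>group_alg. \<forall>b\<in>group_alg. NN (\<lambda>g. a g + b g) \<le> NN a + NN b"
    using NN_tri by blast
  have c3: "\<forall>c. \<forall>a\<in>group_alg. NN (\<lambda>g. c * a g) = cmod c * NN a"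
    using NN_hom by blast
  have c4: "\<forall>a\<in>group_alg. \<forall>b\<in>group_alg. NN (conv a b) \<le> NN a * NN b"
    using NN_submult by blast
  have c5: "\<forall>a\<in>group_alg. NN (conv (inv_star a) a) = (NN a)^2"
    using NN_cstar by blast
  have "is_cstar_norm NN" unfolding is_cstar_norm_def using c1 c2 c3 c4 c5 by blast
  moreover have "\<forall>a\<in>group_alg. NN a \<le> reduced_norm a" using NN_le_rn by blast
  moreover have "\<exists>a\<in>group_alg. NN a < reduced_norm a"
    using ga_a0 NN_a0 rn_a0 by (intro bexI[of _ a0]) simp_all
  ultimately show ?thesis unfolding cstar_r_unique_def by blast
qed


end
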